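(* In the 2SDI setting where Alice measures the qubit observables $A_0=\sigma_x$, $A_1=\sigma_y$ and Bob and Charlie are black boxes, the Mermin family $P^V_{MF}$ ($0<V\le1$) demonstrates genuine tripartite steering if and only if $V>\frac1{\sqrt2}$.
   Context: Outcomes and settings: $a,b,c,x,y,z\in\{0,1\}$. For a qubit observable $O$ with eigenvalues $\pm1$, the measurement has projectors $M_0=(\mathbb 1+O)/2$, $M_1=(\mathbb 1-O)/2$; $M^A_{a|x}$ denotes the projectors of $A_x$. Mermin family: $P^V_{MF}(abc|xyz)=\frac{1+(-1)^{a\oplus b\oplus c\oplus xy\oplus yz\oplus xz}\,\delta_{x\oplus y\oplus1,z}\,V}{8}$. Genuine tripartite steering in the 2SDI scenario: $P$ demonstrates it iff there is no finite $d$, biseparable state $\rho^{ABC}=\sum_\lambda p_\lambda\rho^\lambda_A\otimes\rho^\lambda_{BC}+\sum_\lambda q_\lambda\rho^\lambda_{AC}\otimes\rho^\lambda_B+\sum_\lambda r_\lambda\rho^\lambda_{AB}\otimes\rho^\lambda_C$ on $\mathbb C^2\otimes\mathbb C^d\otimes\mathbb C^d$ (weights nonnegative summing to 1), and POVMs $\{N_{b|y}\}_b$, $\{N'_{c|z}\}_c$ on $\mathbb C^d$ such that $P(abc|xyz)=\mathrm{Tr}[(M^A_{a|x}\otimes N_{b|y}\otimes N'_{c|z})\rho^{ABC}]$. *)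

theory Defs
  imports "HOL-Analysis.Analysis"
begin

text \<open>Operators on a finite-dimensional Hilbert space with orthonormal basis indexed
  by a finite set I are represented by their matrix entries M i j (i, j in I);
  entries outside I are irrelevant.  Bits (outcomes and settings) are naturals in {0,1}.\<close>

type_synonym 'i op = "'i \<Rightarrow> 'i \<Rightarrow> complex"

definition qform :: "'i set \<Rightarrow> 'i op \<Rightarrow> ('i \<Rightarrow> complex) \<Rightarrow> complex" where
  "qform I M v = (\<Sum>i\<in>I. \<Sum>j\<in>I. cnj (v i) * M i j * v j)"

definition psd_on :: "'i set \<Rightarrow> 'i op \<Rightarrow> bool" where
  "psd_on I M \<longleftrightarrow> (\<forall>v. Im (qform I M v) = 0 \<and> 0 \<le> Re (qform I M v))"

definition trace_on :: "'i set \<Rightarrow> 'i op \<Rightarrow> complex" where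
  "trace_on I M = (\<Sum>i\<in>I. M i i)"

definition state_on :: "'i set \<Rightarrow> 'i op \<Rightarrow> bool" where
  "state_on I \<rho> \<longleftrightarrow> psd_on I \<rho> \<and> trace_on I \<rho> = 1"

definition povm2_on :: "'i set \<Rightarrow> (nat \<Rightarrow> 'i op) \<Rightarrow> bool" where
  "povm2_on I N \<longleftrightarrow> psd_on I (N 0) \<and> psd_on I (N 1) \<and>
     (\<forall>i\<in>I. \<forall>j\<in>I. N 0 i j + N 1 i j = (if i = j then 1 else 0))"

definition qubit :: "nat set" where "qubit = {0..<2}"

definition sigma_x :: "nat op" where
  "sigma_x i j = (if i \<noteq> j then 1 else 0)"

definition sigma_y :: "nat op" where
  "sigma_y i j = (if i = 0 \<and> j = 1 then - \<i> else if i = 1 \<and> j = 0 then \<i> else 0)"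

definition alice_obs :: "nat \<Rightarrow> nat op" where
  "alice_obs x = (if x = 0 then sigma_x else sigma_y)"

definition alice_proj :: "nat \<Rightarrow> nat \<Rightarrow> nat op" where
  "alice_proj x a i j = ((if i = j then 1 else 0) + (-1) ^ a * alice_obs x i j) / 2"

text \<open>Mermin family P^V_MF(abc|xyz); XOR of bits = parity of the sum.\<close>
definition mermin :: "real \<Rightarrow> nat \<Rightarrow> nat \<Rightarrow> nat \<Rightarrow> nat \<Rightarrow> nat \<Rightarrow> nat \<Rightarrow> real" where
  "mermin V a b c x y z =
     (1 + (-1) ^ (a + b + c + x * y + y * z + x * z)
          * (if (x + y + 1) mod 2 = z then 1 else 0) * V) / 8"

definition tri_index :: "nat \<Rightarrow> (nat \<times> nat \<times> nat) set" where
  "tri_index d = qubit \<times> {0..<d} \<times> {0..<d}"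

definition biseparable :: "nat \<Rightarrow> (nat \<times> nat \<times> nat) op \<Rightarrow> bool" where
  "biseparable d \<rho> \<longleftrightarrow>
    (\<exists>(n::nat) (p::nat \<Rightarrow> real) (q::nat \<Rightarrow> real) (r::nat \<Rightarrow> real)
       (\<rho>A :: nat \<Rightarrow> nat op) (\<rho>BC :: nat \<Rightarrow> (nat \<times> nat) op)
       (\<rho>AC :: nat \<Rightarrow> (nat \<times> nat) op) (\<rho>B :: nat \<Rightarrow> nat op)
       (\<rho>AB :: nat \<Rightarrow> (nat \<times> nat) op) (\<rho>C :: nat \<Rightarrow> nat op).
       (\<forall>l<n. 0 \<le> p l \<and> 0 \<le> q l \<and> 0 \<le> r l) \<and>
       (\<Sum>l<n. p l + q l + r l) = 1 \<and>
       (\<forall>l<n. state_on qubit (\<rho>A l) \<and> state_on ({0..<d} \<times> {0..<d}) (\<rho>BC l) \<and>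
              state_on (qubit \<times> {0..<d}) (\<rho>AC l) \<and> state_on {0..<d} (\<rho>B l) \<and>
              state_on (qubit \<times> {0..<d}) (\<rho>AB l) \<and> state_on {0..<d} (\<rho>C l)) \<and>
       (\<forall>(a, b, c) \<in> tri_index d. \<forall>(a', b', c') \<in> tri_index d.
          \<rho> (a, b, c) (a', b', c') =
            (\<Sum>l<n. of_real (p l) * \<rho>A l a a' * \<rho>BC l (b, c) (b', c')
                  + of_real (q l) * \<rho>AC l (a, c) (a', c') * \<rho>B l b b'
                  + of_real (r l) * \<rho>AB l (a, b) (a', b') * \<rho>C l c c')))"

text \<open>Tr[(M^A_{a|x} (x) N_{b|y} (x) N'_{c|z}) rho].\<close>
definition tri_prob :: "nat \<Rightarrow> (nat \<times> nat \<times> nat) op \<Rightarrow> nat op \<Rightarrow> nat op \<Rightarrow> nat op \<Rightarrow> complex" where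
  "tri_prob d \<rho> MA NB NC =
     (\<Sum>(a, b, c) \<in> tri_index d. \<Sum>(a', b', c') \<in> tri_index d.
        MA a a' * NB b b' * NC c c' * \<rho> (a', b', c') (a, b, c))"

definition genuine_tripartite_steering_2SDI ::
  "(nat \<Rightarrow> nat \<Rightarrow> nat \<Rightarrow> nat \<Rightarrow> nat \<Rightarrow> nat \<Rightarrow> real) \<Rightarrow> bool" where
  "genuine_tripartite_steering_2SDI P \<longleftrightarrow>
     \<not> (\<exists>(d::nat) \<rho> (N :: nat \<Rightarrow> nat \<Rightarrow> nat op) (N' :: nat \<Rightarrow> nat \<Rightarrow> nat op).
          1 \<le> d \<and> biseparable d \<rho> \<and>
          (\<forall>y\<in>{0,1}. povm2_on {0..<d} (N y)) \<and>
          (\<forall>z\<in>{0,1}. povm2_on {0..<d} (N' z)) \<and>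
          (\<forall>a\<in>{0,1}. \<forall>b\<in>{0,1}. \<forall>c\<in>{0,1}. \<forall>x\<in>{0,1}. \<forall>y\<in>{0,1}. \<forall>z\<in>{0,1}.
             complex_of_real (P a b c x y z) =
               tri_prob d \<rho> (alice_proj x a) (N y b) (N' z c)))"

end

theory Submission
  imports Defs
begin


definition sq :: "'i set \<Rightarrow> 'i op \<Rightarrow> ('i \<Rightarrow> complex) \<Rightarrow> ('i \<Rightarrow> complex) \<Rightarrow> complex" where
  "sq I M u w = (\<Sum>i\<in>I. \<Sum>j\<in>I. cnj (u i) * M i j * w j)"

lemma qform_sq: "qform I M v = sq I M v v" by (simp add: qform_def sq_def)

lemma qform_supp:
  assumes "finite I" "S \<subseteq> I" "\<And>k. k \<in> I \<Longrightarrow> k \<notin> S \<Longrightarrow> v k = 0"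
  shows "qform I M v = qform S M v"
proof -
  have "qform I M v = (\<Sum>i\<in>I. \<Sum>j\<in>S. cnj (v i) * M i j * v j)"
    unfolding qform_def
    by (rule sum.cong[OF refl], rule sum.mono_neutral_right) (use assms finite_subset[OF assms(2,1)] in auto)
  also have "\<dots> = (\<Sum>i\<in>S. \<Sum>j\<in>S. cnj (v i) * M i j * v j)"
    by (rule sum.mono_neutral_right) (use assms in \<open>auto intro!: sum.neutral\<close>)
  finally show ?thesis by (simp add: qform_def)
qed

lemma psd_real: "psd_on I M \<Longrightarrow> qform I M v = complex_of_real (Re (qform I M v))"
  unfolding psd_on_def by (simp add: complex_eq_iff)

lemma psd_diag:
  assumes "psd_on I M" "finite I" "i \<in> I"
  shows "Im (M i i) = 0" "Re (M i i) \<ge> 0"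
proof -
  let ?v = "\<lambda>k. if k = i then 1 else 0 :: complex"
  have "qform I M ?v = qform {i} M ?v" by (rule qform_supp) (use assms in auto)
  also have "\<dots> = M i i" by (simp add: qform_def)
  finally show "Im (M i i) = 0" "Re (M i i) \<ge> 0" using assms(1) unfolding psd_on_def by metis+
qed

lemma qform_two:
  assumes "finite I" "i \<in> I" "j \<in> I" "i \<noteq> j"
  shows "qform I M (\<lambda>k. if k = i then a else if k = j then b else 0) =
     cnj a * M i i * a + cnj a * M i j * b + cnj b * M j i * a + cnj b * M j j * b"
proof -
  have "qform I M (\<lambda>k. if k = i then a else if k = j then b else 0)
     = qform {i,j} M (\<lambda>k. if k = i then a else if k = j then b else 0)"
    by (rule qform_supp) (use assms in auto)
  also have "\<dots> = cnj a * M i i * a + cnj a * M i j * b + cnj b * M j i * a + cnj b * M j j * b"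
    using assms(4) by (simp add: qform_def)
  finally show ?thesis by simp
qed

lemma psd_herm:
  assumes "psd_on I M" "finite I" "i \<in> I" "j \<in> I"
  shows "M j i = cnj (M i j)"
proof (cases "i = j")
  case True then show ?thesis using psd_diag[OF assms(1-3)] by (simp add: complex_eq_iff)
next
  case False
  have 1: "Im (qform I M (\<lambda>k. if k = i then 1 else if k = j then 1 else 0)) = 0"
    using assms(1) unfolding psd_on_def by blast
  have 2: "Im (qform I M (\<lambda>k. if k = i then 1 else if k = j then \<i> else 0)) = 0"
    using assms(1) unfolding psd_on_def by blast
  have d1: "Im (M i i) = 0" "Im (M j j) = 0" using psd_diag(1)[OF assms(1,2,3)] psd_diag(1)[OF assms(1,2,4)] by auto
  have a: "Im (M i j) + Im (M j i) = 0" using 1 unfolding qform_two[OF assms(2-4) False] using d1 by simp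
  have b: "Re (M i j) - Re (M j i) = 0" using 2 unfolding qform_two[OF assms(2-4) False] using d1 by simp
  from a b show ?thesis by (simp add: complex_eq_iff)
qed


lemma qform_cong: "(\<And>k. k \<in> I \<Longrightarrow> v k = w k) \<Longrightarrow> qform I M v = qform I M w"
  unfolding qform_def by (intro sum.cong refl) auto

lemma psd_restrict:
  assumes "psd_on (insert x F) M" "finite F" "x \<notin> F"
  shows "psd_on F M"
  unfolding psd_on_def
proof
  fix v
  have "qform (insert x F) M (v(x:=0)) = qform F M (v(x:=0))"
    by (rule qform_supp) (use assms in auto)
  also have "\<dots> = qform F M v" by (rule qform_cong) (use assms in auto)
  finally have e: "qform (insert x F) M (v(x:=0)) = qform F M v" .
  have "Im (qform (insert x F) M (v(x:=0))) = 0 \<and> 0 \<le> Re (qform (insert x F) M (v(x:=0)))"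
    using assms(1) unfolding psd_on_def by blast
  then show "Im (qform F M v) = 0 \<and> 0 \<le> Re (qform F M v)" unfolding e .
qed

lemma cnj_mult_self: "cnj z * z = complex_of_real ((cmod z)^2)"
  using complex_norm_square[of z] by (simp add: mult.commute)

lemma qform_insert:
  assumes "finite F" "x \<notin> F"
  shows "qform (insert x F) M w = cnj (w x) * M x x * w x + (\<Sum>j\<in>F. cnj (w x) * M x j * w j)
      + (\<Sum>i\<in>F. cnj (w i) * M i x * w x) + qform F M w"
  using assms by (simp add: qform_def sum.distrib)



lemma psd_zero_row:
  assumes psd: "psd_on I M" and fin: "finite I" and x: "x \<in> I" and j: "j \<in> I" and jx: "j \<noteq> x"
    and z: "M x x = 0"
  shows "M x j = 0"
proof (rule ccontr)
  assume nz: "M x j \<noteq> 0"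
  define \<mu> where "\<mu> = M x j"
  define m where "m = Re (M j j)"
  define s where "s = (m + 1) / (2 * (cmod \<mu>)^2)"
  have cp: "(cmod \<mu>)^2 > 0" using nz by (simp add: \<mu>_def)
  define t where "t = - complex_of_real s * \<mu>"
  have h: "M j x = cnj \<mu>" using psd_herm[OF psd fin x j] by (simp add: \<mu>_def)
  have q: "qform I M (\<lambda>k. if k = x then t else if k = j then 1 else 0)
        = cnj t * M x j + M j x * t + M j j"
    using qform_two[OF fin x j jx[symmetric], of M t 1] z by simp
  have "Re (qform I M (\<lambda>k. if k = x then t else if k = j then 1 else 0)) \<ge> 0"
    using psd unfolding psd_on_def by blast
  moreover have "Re (cnj t * M x j + M j x * t + M j j) = - 2 * s * (cmod \<mu>)^2 + m"
  proof -
    have "cnj t * M x j = - complex_of_real s * (cnj \<mu> * \<mu>)" by (simp add: t_def \<mu>_def)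
    moreover have "M j x * t = - complex_of_real s * (cnj \<mu> * \<mu>)" by (simp add: t_def h)
    ultimately show ?thesis unfolding cnj_mult_self by (simp add: m_def)
  qed
  moreover have "- 2 * s * (cmod \<mu>)^2 + m = -1" using cp by (simp add: s_def field_simps)
  ultimately show False using q by simp
qed

lemma sum_list_upd0: "(\<Sum>v\<leftarrow>map (\<lambda>v. v(x:=0)) vs. f v) = (\<Sum>v\<leftarrow>vs. f (v(x:=0)))"
  by (induction vs) auto

lemma sum_list_map_zero[simp]: "(\<Sum>v\<leftarrow>vs. (0::complex)) = 0"
  by (induction vs) auto

lemma psd_decomp:
  assumes "finite I" "psd_on I M"
  shows "\<exists>vs. \<forall>i\<in>I. \<forall>j\<in>I. M i j = (\<Sum>v\<leftarrow>vs. v i * cnj (v j))"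
  using assms
proof (induction I arbitrary: M rule: finite_induct)
  case empty then show ?case by auto
next
  case (insert x F)
  note fin = \<open>finite F\<close> and xF = \<open>x \<notin> F\<close> and psd = \<open>psd_on (insert x F) M\<close>
  have finI: "finite (insert x F)" using fin by simp
  have herm: "\<And>i j. i \<in> insert x F \<Longrightarrow> j \<in> insert x F \<Longrightarrow> M j i = cnj (M i j)"
    using psd_herm[OF psd finI] by blast
  have dI: "Im (M x x) = 0" and dR: "Re (M x x) \<ge> 0" using psd_diag[OF psd finI] by auto
  define p where "p = Re (M x x)"
  have Mxx: "M x x = complex_of_real p" using dI by (simp add: p_def complex_eq_iff)
  show ?case
  proof (cases "p = 0")
    case True
    have z: "M x j = 0" if "j \<in> F" for j
      using psd_zero_row[OF psd finI, of x j] that xF Mxx True by auto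
    have z2: "M j x = 0" if "j \<in> F" for j using herm[of x j] z[OF that] that by simp
    obtain vs where vs: "\<forall>i\<in>F. \<forall>j\<in>F. M i j = (\<Sum>v\<leftarrow>vs. v i * cnj (v j))"
      using insert.IH[OF psd_restrict[OF psd fin xF]] by blast
    show ?thesis
    proof (rule exI[of _ "map (\<lambda>v. v(x:=0)) vs"], intro ballI)
      fix i j assume i: "i \<in> insert x F" and j: "j \<in> insert x F"
      show "M i j = (\<Sum>v\<leftarrow>map (\<lambda>v. v(x:=0)) vs. v i * cnj (v j))"
      proof (cases "i = x \<or> j = x")
        case True then show ?thesis using i j z z2 Mxx \<open>p = 0\<close> by (auto simp: o_def sum_list_upd0 o_def)
      next
        case False then show ?thesis using i j vs by (auto simp: sum_list_upd0 o_def)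
      qed
    qed
  next
    case False
    then have pp: "p > 0" using dR p_def by simp
    define r where "r = sqrt p"
    have rp: "r > 0" "r * r = p" using pp by (auto simp: r_def)
    define u where "u = (\<lambda>i. M i x / complex_of_real r)"
    define M' where "M' = (\<lambda>i j. M i j - u i * cnj (u j))"
    have psd': "psd_on F M'"
      unfolding psd_on_def
    proof
      fix v
      define s where "s = (\<Sum>j\<in>F. M x j * v j)"
      define t where "t = - s / complex_of_real p"
      define w where "w = v(x := t)"
      have wF: "\<And>k. k \<in> F \<Longrightarrow> w k = v k" using xF by (auto simp: w_def)
      have s1: "(\<Sum>j\<in>F. cnj (w x) * M x j * w j) = cnj t * s"
        using wF by (simp add: w_def s_def sum_distrib_left mult.assoc)
      have s2: "(\<Sum>i\<in>F. cnj (w i) * M i x * w x) = t * cnj s"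
      proof -
        have "(\<Sum>i\<in>F. cnj (w i) * M i x * w x) = (\<Sum>i\<in>F. t * cnj (M x i * v i))"
          using wF herm[of x] by (intro sum.cong refl) (auto simp: w_def mult.commute)
        also have "\<dots> = t * cnj s" by (simp add: s_def sum_distrib_left)
        finally show ?thesis .
      qed
      have qw: "qform (insert x F) M w = cnj t * complex_of_real p * t + cnj t * s + t * cnj s + qform F M v"
        unfolding qform_insert[OF fin xF] s1 s2 using Mxx wF qform_cong[of F w v M] by (simp add: w_def)
      have qw2: "qform (insert x F) M w = qform F M v - s * cnj s / complex_of_real p"
        unfolding qw t_def using pp by (simp add: field_simps)
      have qM': "qform F M' v = qform F M v - (\<Sum>i\<in>F. cnj (v i) * u i) * (\<Sum>j\<in>F. cnj (u j) * v j)"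
      proof -
        have "(\<Sum>i\<in>F. cnj (v i) * u i) * (\<Sum>j\<in>F. cnj (u j) * v j) = (\<Sum>i\<in>F. \<Sum>j\<in>F. cnj (v i) * u i * (cnj (u j) * v j))"
          by (rule sum_product)
        moreover have "qform F M' v = (\<Sum>i\<in>F. \<Sum>j\<in>F. cnj (v i) * M i j * v j - cnj (v i) * u i * (cnj (u j) * v j))"
          unfolding qform_def M'_def by (simp add: algebra_simps)
        ultimately show ?thesis by (simp add: qform_def sum_subtractf)
      qed
      have u1: "(\<Sum>j\<in>F. cnj (u j) * v j) = s / complex_of_real r"
      proof -
        have "(\<Sum>j\<in>F. cnj (u j) * v j) = (\<Sum>j\<in>F. M x j * v j / complex_of_real r)"
          using herm[of x] by (intro sum.cong refl) (auto simp: u_def)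
        then show ?thesis by (simp add: s_def sum_divide_distrib)
      qed
      have u2: "(\<Sum>i\<in>F. cnj (v i) * u i) = cnj s / complex_of_real r"
      proof -
        have "(\<Sum>i\<in>F. cnj (v i) * u i) = (\<Sum>i\<in>F. cnj (M x i * v i) / complex_of_real r)"
          using herm[of x] by (intro sum.cong refl) (auto simp: u_def mult.commute)
        then show ?thesis by (simp add: s_def sum_divide_distrib)
      qed
      have "qform F M' v = qform (insert x F) M w"
      proof -
        have "complex_of_real r * complex_of_real r = complex_of_real p" using rp by (simp flip: of_real_mult)
        then show ?thesis unfolding qM' u1 u2 qw2 using rp pp by (simp add: field_simps)
      qed
      moreover have "Im (qform (insert x F) M w) = 0 \<and> 0 \<le> Re (qform (insert x F) M w)"
        using psd unfolding psd_on_def by blast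
      ultimately show "Im (qform F M' v) = 0 \<and> 0 \<le> Re (qform F M' v)" by simp
    qed
    obtain vs where vs: "\<forall>i\<in>F. \<forall>j\<in>F. M' i j = (\<Sum>v\<leftarrow>vs. v i * cnj (v j))"
      using insert.IH[OF psd'] by blast
    have ux: "u x = complex_of_real r" using Mxx rp by (simp add: u_def field_simps flip: of_real_mult)
    show ?thesis
    proof (rule exI[of _ "u # map (\<lambda>v. v(x:=0)) vs"], intro ballI)
      fix i j assume i: "i \<in> insert x F" and j: "j \<in> insert x F"
      show "M i j = (\<Sum>v\<leftarrow>u # map (\<lambda>v. v(x:=0)) vs. v i * cnj (v j))"
      proof (cases "i = x")
        case True
        then show ?thesis
        proof (cases "j = x")
          case True then show ?thesis using \<open>i = x\<close> ux Mxx rp by (simp add: o_def sum_list_upd0 flip: of_real_mult)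
        next
          case False
          then have "M x j = cnj (M j x)" using herm[of j x] j by simp
          then show ?thesis using \<open>i = x\<close> False ux rp by (simp add: u_def o_def sum_list_upd0 o_def)
        qed
      next
        case False
        then have iF: "i \<in> F" using i by simp
        show ?thesis
        proof (cases "j = x")
          case True then show ?thesis using False ux rp by (simp add: u_def o_def sum_list_upd0 o_def)
        next
          case jx: False
          then have jF: "j \<in> F" using j by simp
          have "(\<Sum>v\<leftarrow>vs. (v(x := 0)) i * cnj ((v(x := 0)) j)) = M' i j"
            using vs iF jF False jx by simp
          then show ?thesis by (simp add: M'_def sum_list_upd0 o_def)
        qed
      qed
    qed
  qed
qed



definition tr1 :: "'i set \<Rightarrow> 'i op \<Rightarrow> 'i op \<Rightarrow> complex" where
  "tr1 I T M = (\<Sum>i\<in>I. \<Sum>j\<in>I. T i j * M j i)"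

definition nrm :: "'i set \<Rightarrow> ('i \<Rightarrow> complex) \<Rightarrow> real" where
  "nrm I v = (\<Sum>i\<in>I. (cmod (v i))^2)"

lemma nrm_nonneg: "nrm I v \<ge> 0" unfolding nrm_def by (simp add: sum_nonneg)

lemma sum_sum_list_swap: "(\<Sum>i\<in>I. \<Sum>v\<leftarrow>vs. f i v) = (\<Sum>v\<leftarrow>vs. \<Sum>i\<in>I. f i v)"
  by (induction vs) (auto simp: sum.distrib)

lemma mult_sum_list: "(c::complex) * (\<Sum>v\<leftarrow>vs. f v) = (\<Sum>v\<leftarrow>vs. c * f v)"
  by (induction vs) (auto simp: algebra_simps)

lemma tr1_decomp:
  assumes "finite I" "psd_on I \<rho>"
  obtains vs where "\<And>T. tr1 I T \<rho> = (\<Sum>v\<leftarrow>vs. qform I T v)"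
    "trace_on I \<rho> = (\<Sum>v\<leftarrow>vs. complex_of_real (nrm I v))"
proof -
  obtain vs where vs: "\<forall>i\<in>I. \<forall>j\<in>I. \<rho> i j = (\<Sum>v\<leftarrow>vs. v i * cnj (v j))"
    using psd_decomp[OF assms] by blast
  have 1: "tr1 I T \<rho> = (\<Sum>v\<leftarrow>vs. qform I T v)" for T
  proof -
    have "tr1 I T \<rho> = (\<Sum>i\<in>I. \<Sum>j\<in>I. \<Sum>v\<leftarrow>vs. cnj (v i) * T i j * v j)"
      unfolding tr1_def using vs by (intro sum.cong refl) (simp add: mult_sum_list mult_ac)
    also have "\<dots> = (\<Sum>v\<leftarrow>vs. qform I T v)" by (simp add: sum_sum_list_swap qform_def)
    finally show ?thesis .
  qed
  have 2: "trace_on I \<rho> = (\<Sum>v\<leftarrow>vs. complex_of_real (nrm I v))"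
  proof -
    have "trace_on I \<rho> = (\<Sum>i\<in>I. \<Sum>v\<leftarrow>vs. complex_of_real ((cmod (v i))^2))"
      unfolding trace_on_def using vs by (intro sum.cong refl) (simp add: complex_norm_square del: of_real_power)
    also have "\<dots> = (\<Sum>v\<leftarrow>vs. complex_of_real (nrm I v))" by (simp add: sum_sum_list_swap nrm_def)
    finally show ?thesis .
  qed
  show ?thesis using that 1 2 by blast
qed

lemma Re_sum_list: "Re (\<Sum>v\<leftarrow>vs. f v) = (\<Sum>v\<leftarrow>vs. Re (f v))"
  by (induction vs) auto
lemma Im_sum_list: "Im (\<Sum>v\<leftarrow>vs. f v) = (\<Sum>v\<leftarrow>vs. Im (f v))"
  by (induction vs) auto

lemma sum_list_mono_le: "(\<And>v. f v \<le> g v) \<Longrightarrow> (\<Sum>v\<leftarrow>vs. f v) \<le> (\<Sum>v\<leftarrow>vs. (g v::real))"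
  by (induction vs) (auto intro: add_mono)

lemma sum_list_zero': "(\<And>v. f v = 0) \<Longrightarrow> (\<Sum>v\<leftarrow>vs. f v) = (0::real)"
  by (induction vs) auto




definition tens :: "'a op \<Rightarrow> 'b op \<Rightarrow> ('a \<times> 'b) op" where
  "tens A B = (\<lambda>(i, j) (i', j'). A i i' * B j j')"

lemma sum_prod3: "(\<Sum>(a, b, c)\<in>A \<times> B \<times> C. f a b c) = (\<Sum>a\<in>A. \<Sum>b\<in>B. \<Sum>c\<in>C. f a b c)"
  by (simp add: sum.cartesian_product)

lemma sum_prod2: "(\<Sum>(a, b)\<in>A \<times> B. f a b) = (\<Sum>a\<in>A. \<Sum>b\<in>B. f a b)"
  by (simp add: sum.cartesian_product)

lemma swap_in3: "(\<Sum>b\<in>B. \<Sum>c\<in>C. \<Sum>a\<in>A. g b c a) = (\<Sum>a\<in>A. \<Sum>b\<in>B. \<Sum>c\<in>C. g b c a)"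
proof -
  have "(\<Sum>b\<in>B. \<Sum>c\<in>C. \<Sum>a\<in>A. g b c a) = (\<Sum>b\<in>B. \<Sum>a\<in>A. \<Sum>c\<in>C. g b c a)"
    by (rule sum.cong[OF refl], rule sum.swap)
  also have "\<dots> = (\<Sum>a\<in>A. \<Sum>b\<in>B. \<Sum>c\<in>C. g b c a)" by (rule sum.swap)
  finally show ?thesis .
qed

lemma sum_pair: "(\<Sum>x\<in>A \<times> B. f x) = (\<Sum>a\<in>A. \<Sum>b\<in>B. f (a, b))"
  unfolding sum.cartesian_product by simp

lemma tr1_tens: "tr1 (A \<times> B) (tens M N) Y = (\<Sum>a\<in>A. \<Sum>b\<in>B. \<Sum>a'\<in>A. \<Sum>b'\<in>B. M a a' * N b b' * Y (a', b') (a, b))"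
  unfolding tr1_def tens_def sum_pair by (simp add: sum_pair)

lemma P1:
  "(\<Sum>(a, b, c)\<in>A \<times> B \<times> C. \<Sum>(a', b', c')\<in>A \<times> B \<times> C. MA a a' * NB b b' * NC c c' * (X a' a * Y (b', c') (b, c)))
   = tr1 A MA X * tr1 (B \<times> C) (tens NB NC) Y"
proof -
  have "(\<Sum>(a, b, c)\<in>A \<times> B \<times> C. \<Sum>(a', b', c')\<in>A \<times> B \<times> C. MA a a' * NB b b' * NC c c' * (X a' a * Y (b', c') (b, c)))
    = (\<Sum>a\<in>A. \<Sum>b\<in>B. \<Sum>c\<in>C. \<Sum>a'\<in>A. \<Sum>b'\<in>B. \<Sum>c'\<in>C. (MA a a' * X a' a) * (NB b b' * NC c c' * Y (b', c') (b, c)))"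
    unfolding sum_prod3 by (simp add: mult_ac)
  also have "\<dots> = (\<Sum>a\<in>A. \<Sum>a'\<in>A. \<Sum>b\<in>B. \<Sum>c\<in>C. \<Sum>b'\<in>B. \<Sum>c'\<in>C. (MA a a' * X a' a) * (NB b b' * NC c c' * Y (b', c') (b, c)))"
    by (rule sum.cong[OF refl], rule swap_in3)
  also have "\<dots> = tr1 A MA X * tr1 (B \<times> C) (tens NB NC) Y"
    unfolding tr1_tens unfolding tr1_def sum_distrib_right unfolding sum_distrib_left ..
  finally show ?thesis .
qed

lemma P2:
  "(\<Sum>(a, b, c)\<in>A \<times> B \<times> C. \<Sum>(a', b', c')\<in>A \<times> B \<times> C. MA a a' * NB b b' * NC c c' * (Z (a', c') (a, c) * W b' b))
   = tr1 (A \<times> C) (tens MA NC) Z * tr1 B NB W"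
proof -
  let ?F = "\<lambda>a b c a' b' c'. (MA a a' * NC c c' * Z (a', c') (a, c)) * (NB b b' * W b' b)"
  have "(\<Sum>(a, b, c)\<in>A \<times> B \<times> C. \<Sum>(a', b', c')\<in>A \<times> B \<times> C. MA a a' * NB b b' * NC c c' * (Z (a', c') (a, c) * W b' b))
    = (\<Sum>a\<in>A. \<Sum>b\<in>B. \<Sum>c\<in>C. \<Sum>a'\<in>A. \<Sum>b'\<in>B. \<Sum>c'\<in>C. ?F a b c a' b' c')"
    unfolding sum_prod3 by (simp add: mult_ac)
  also have "\<dots> = (\<Sum>a\<in>A. \<Sum>c\<in>C. \<Sum>b\<in>B. \<Sum>a'\<in>A. \<Sum>b'\<in>B. \<Sum>c'\<in>C. ?F a b c a' b' c')"
    by (rule sum.cong[OF refl], rule sum.swap)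
  also have "\<dots> = (\<Sum>a\<in>A. \<Sum>c\<in>C. \<Sum>a'\<in>A. \<Sum>b\<in>B. \<Sum>b'\<in>B. \<Sum>c'\<in>C. ?F a b c a' b' c')"
    by (rule sum.cong[OF refl], rule sum.cong[OF refl], rule sum.swap)
  also have "\<dots> = (\<Sum>a\<in>A. \<Sum>c\<in>C. \<Sum>a'\<in>A. \<Sum>c'\<in>C. \<Sum>b\<in>B. \<Sum>b'\<in>B. ?F a b c a' b' c')"
    by (rule sum.cong[OF refl], rule sum.cong[OF refl], rule sum.cong[OF refl], rule swap_in3)
  also have "\<dots> = tr1 (A \<times> C) (tens MA NC) Z * tr1 B NB W"
    unfolding tr1_tens unfolding tr1_def sum_distrib_right unfolding sum_distrib_left ..
  finally show ?thesis .
qed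

lemma P3:
  "(\<Sum>(a, b, c)\<in>A \<times> B \<times> C. \<Sum>(a', b', c')\<in>A \<times> B \<times> C. MA a a' * NB b b' * NC c c' * (Z (a', b') (a, b) * W c' c))
   = tr1 (A \<times> B) (tens MA NB) Z * tr1 C NC W"
proof -
  let ?F = "\<lambda>a b c a' b' c'. (MA a a' * NB b b' * Z (a', b') (a, b)) * (NC c c' * W c' c)"
  have "(\<Sum>(a, b, c)\<in>A \<times> B \<times> C. \<Sum>(a', b', c')\<in>A \<times> B \<times> C. MA a a' * NB b b' * NC c c' * (Z (a', b') (a, b) * W c' c))
    = (\<Sum>a\<in>A. \<Sum>b\<in>B. \<Sum>c\<in>C. \<Sum>a'\<in>A. \<Sum>b'\<in>B. \<Sum>c'\<in>C. ?F a b c a' b' c')"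
    unfolding sum_prod3 by (simp add: mult_ac)
  also have "\<dots> = (\<Sum>a\<in>A. \<Sum>b\<in>B. \<Sum>a'\<in>A. \<Sum>c\<in>C. \<Sum>b'\<in>B. \<Sum>c'\<in>C. ?F a b c a' b' c')"
    by (rule sum.cong[OF refl], rule sum.cong[OF refl], rule sum.swap)
  also have "\<dots> = (\<Sum>a\<in>A. \<Sum>b\<in>B. \<Sum>a'\<in>A. \<Sum>b'\<in>B. \<Sum>c\<in>C. \<Sum>c'\<in>C. ?F a b c a' b' c')"
    by (rule sum.cong[OF refl], rule sum.cong[OF refl], rule sum.cong[OF refl], rule sum.swap)
  also have "\<dots> = tr1 (A \<times> B) (tens MA NB) Z * tr1 C NC W"
    unfolding tr1_tens unfolding tr1_def sum_distrib_right unfolding sum_distrib_left ..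
  finally show ?thesis .
qed



lemma tri_prob_bisep:
  assumes rho: "\<forall>(a, b, c) \<in> tri_index d. \<forall>(a', b', c') \<in> tri_index d.
          \<rho> (a, b, c) (a', b', c') =
            (\<Sum>l<n. of_real (p l) * \<rho>A l a a' * \<rho>BC l (b, c) (b', c')
                  + of_real (q l) * \<rho>AC l (a, c) (a', c') * \<rho>B l b b'
                  + of_real (r l) * \<rho>AB l (a, b) (a', b') * \<rho>C l c c')"
  shows "tri_prob d \<rho> MA NB NC = (\<Sum>l<n.
      of_real (p l) * (tr1 qubit MA (\<rho>A l) * tr1 ({0..<d} \<times> {0..<d}) (tens NB NC) (\<rho>BC l))
    + of_real (q l) * (tr1 (qubit \<times> {0..<d}) (tens MA NC) (\<rho>AC l) * tr1 {0..<d} NB (\<rho>B l))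
    + of_real (r l) * (tr1 (qubit \<times> {0..<d}) (tens MA NB) (\<rho>AB l) * tr1 {0..<d} NC (\<rho>C l)))"
proof -
  let ?T = "qubit \<times> {0..<d} \<times> {0..<d}"
  define f1 where "f1 l = (\<lambda>(a::nat, b::nat, c::nat) (a'::nat, b'::nat, c'::nat). MA a a' * NB b b' * NC c c' * (\<rho>A l a' a * \<rho>BC l (b', c') (b, c)))" for l
  define f2 where "f2 l = (\<lambda>(a::nat, b::nat, c::nat) (a'::nat, b'::nat, c'::nat). MA a a' * NB b b' * NC c c' * (\<rho>AC l (a', c') (a, c) * \<rho>B l b' b))" for l
  define f3 where "f3 l = (\<lambda>(a::nat, b::nat, c::nat) (a'::nat, b'::nat, c'::nat). MA a a' * NB b b' * NC c c' * (\<rho>AB l (a', b') (a, b) * \<rho>C l c' c))" for l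
  have "tri_prob d \<rho> MA NB NC = (\<Sum>t\<in>?T. \<Sum>t'\<in>?T. \<Sum>l<n. of_real (p l) * f1 l t t' + of_real (q l) * f2 l t t' + of_real (r l) * f3 l t t')"
    unfolding tri_prob_def tri_index_def
    apply (intro sum.cong refl, clarify, intro sum.cong refl, clarify)
    subgoal premises t for a b c a' b' c'
    proof -
      have e: "\<rho> (a', b', c') (a, b, c) = (\<Sum>l<n. of_real (p l) * \<rho>A l a' a * \<rho>BC l (b', c') (b, c)
                  + of_real (q l) * \<rho>AC l (a', c') (a, c) * \<rho>B l b' b
                  + of_real (r l) * \<rho>AB l (a', b') (a, b) * \<rho>C l c' c)"
        using rho t unfolding tri_index_def by fast
      show ?thesis
        unfolding e f1_def f2_def f3_def by (simp add: sum_distrib_left algebra_simps)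
    qed
    done
  also have "\<dots> = (\<Sum>l<n. \<Sum>t\<in>?T. \<Sum>t'\<in>?T. of_real (p l) * f1 l t t' + of_real (q l) * f2 l t t' + of_real (r l) * f3 l t t')"
    by (simp add: sum.swap[of _ "{..<n}"])
  also have "\<dots> = (\<Sum>l<n. of_real (p l) * (\<Sum>t\<in>?T. \<Sum>t'\<in>?T. f1 l t t') + of_real (q l) * (\<Sum>t\<in>?T. \<Sum>t'\<in>?T. f2 l t t') + of_real (r l) * (\<Sum>t\<in>?T. \<Sum>t'\<in>?T. f3 l t t'))"
    by (simp add: sum.distrib sum_distrib_left)
  also have "\<dots> = (\<Sum>l<n.
      of_real (p l) * (tr1 qubit MA (\<rho>A l) * tr1 ({0..<d} \<times> {0..<d}) (tens NB NC) (\<rho>BC l))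
    + of_real (q l) * (tr1 (qubit \<times> {0..<d}) (tens MA NC) (\<rho>AC l) * tr1 {0..<d} NB (\<rho>B l))
    + of_real (r l) * (tr1 (qubit \<times> {0..<d}) (tens MA NB) (\<rho>AB l) * tr1 {0..<d} NC (\<rho>C l)))"
    unfolding f1_def f2_def f3_def by (simp only: split_def P1[unfolded split_def] P2[unfolded split_def] P3[unfolded split_def])
  finally show ?thesis .
qed



definition Ob :: "'i set \<Rightarrow> 'i op \<Rightarrow> 'i op \<Rightarrow> ('i \<Rightarrow> complex) \<Rightarrow> ('i \<Rightarrow> complex) \<Rightarrow> complex" where
  "Ob D N0 N1 u w = sq D N0 u w - sq D N1 u w"

lemma sq_polar: "sq D M (\<lambda>i. p i + q i) (\<lambda>i. p i + q i) - sq D M (\<lambda>i. p i - q i) (\<lambda>i. p i - q i)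
   = 2 * (sq D M p q + sq D M q p)"
proof -
  have "sq D M (\<lambda>i. p i + q i) (\<lambda>i. p i + q i) - sq D M (\<lambda>i. p i - q i) (\<lambda>i. p i - q i)
     = (\<Sum>i\<in>D. \<Sum>j\<in>D. 2 * (cnj (p i) * M i j * q j) + 2 * (cnj (q i) * M i j * p j))"
    unfolding sq_def sum_subtractf[symmetric] by (intro sum.cong refl) (simp add: algebra_simps)
  also have "\<dots> = 2 * (sq D M p q + sq D M q p)"
    by (simp add: sq_def sum.distrib sum_distrib_left)
  finally show ?thesis .
qed

lemma sq_scale: "sq D M (\<lambda>i. complex_of_real s * p i) (\<lambda>i. q i / complex_of_real s) = sq D M p q" if "s \<noteq> 0"
  unfolding sq_def using that by (intro sum.cong refl) (simp add: field_simps)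

lemma sq_scale_r: "sq D M p (\<lambda>i. c * q i) = c * sq D M p q"
  unfolding sq_def by (simp add: sum_distrib_left mult_ac)

lemma sq_scale_l: "sq D M (\<lambda>i. c * p i) q = cnj c * sq D M p q"
  unfolding sq_def by (simp add: sum_distrib_left mult_ac)

lemma nrm_scale: "nrm D (\<lambda>i. c * p i) = (cmod c)^2 * nrm D p"
  unfolding nrm_def by (simp add: sum_distrib_left norm_mult power_mult_distrib)

lemma nrm_parallel: "nrm D (\<lambda>i. p i + q i) + nrm D (\<lambda>i. p i - q i) = 2 * nrm D p + 2 * nrm D q"
proof -
  have "\<And>a b :: complex. (cmod (a + b))^2 + (cmod (a - b))^2 = 2 * (cmod a)^2 + 2 * (cmod b)^2"
    unfolding cmod_power2 by (simp add: power2_eq_square algebra_simps)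
  then show ?thesis unfolding nrm_def by (simp add: sum.distrib[symmetric] sum_distrib_left)
qed

locale povm_pair =
  fixes D :: "'i set" and N0 N1 :: "'i op"
  assumes fin: "finite D" and psd0: "psd_on D N0" and psd1: "psd_on D N1"
    and sumI: "\<And>i j. i \<in> D \<Longrightarrow> j \<in> D \<Longrightarrow> N0 i j + N1 i j = (if i = j then 1 else 0)"
begin

lemma q_sum: "qform D N0 z + qform D N1 z = complex_of_real (nrm D z)"
proof -
  have "qform D N0 z + qform D N1 z = (\<Sum>i\<in>D. \<Sum>j\<in>D. cnj (z i) * (N0 i j + N1 i j) * z j)"
    unfolding qform_def by (simp add: sum.distrib[symmetric] algebra_simps)
  also have "\<dots> = (\<Sum>i\<in>D. cnj (z i) * z i)"
  proof (intro sum.cong refl)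
    fix i assume i: "i \<in> D"
    have "(\<Sum>j\<in>D. cnj (z i) * (N0 i j + N1 i j) * z j) = (\<Sum>j\<in>D. if i = j then cnj (z i) * z j else 0)"
      using i by (intro sum.cong refl) (simp add: sumI)
    also have "\<dots> = cnj (z i) * z i" using fin i by simp
    finally show "(\<Sum>j\<in>D. cnj (z i) * (N0 i j + N1 i j) * z j) = cnj (z i) * z i" .
  qed
  also have "\<dots> = complex_of_real (nrm D z)"
    unfolding nrm_def by (simp add: cnj_mult_self del: of_real_power)
  finally show ?thesis .
qed

lemma Ob_diag: "\<bar>Re (Ob D N0 N1 z z)\<bar> \<le> nrm D z" "Im (Ob D N0 N1 z z) = 0"
proof -
  have r0: "Im (qform D N0 z) = 0" "Re (qform D N0 z) \<ge> 0" using psd0 unfolding psd_on_def by auto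
  have r1: "Im (qform D N1 z) = 0" "Re (qform D N1 z) \<ge> 0" using psd1 unfolding psd_on_def by auto
  have s: "Re (qform D N0 z) + Re (qform D N1 z) = nrm D z" using arg_cong[OF q_sum, of Re] by simp
  show "\<bar>Re (Ob D N0 N1 z z)\<bar> \<le> nrm D z" "Im (Ob D N0 N1 z z) = 0"
    unfolding Ob_def qform_sq[symmetric] using r0 r1 s by auto
qed

lemma Ob_pair_basic: "Re (Ob D N0 N1 p q + Ob D N0 N1 q p) \<le> nrm D p + nrm D q"
proof -
  have eq: "2 * (Ob D N0 N1 p q + Ob D N0 N1 q p) =
     Ob D N0 N1 (\<lambda>i. p i + q i) (\<lambda>i. p i + q i) - Ob D N0 N1 (\<lambda>i. p i - q i) (\<lambda>i. p i - q i)"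
    unfolding Ob_def using sq_polar[of D N0 p q] sq_polar[of D N1 p q] by (simp add: algebra_simps)
  then have "2 * Re (Ob D N0 N1 p q + Ob D N0 N1 q p) = Re (Ob D N0 N1 (\<lambda>i. p i + q i) (\<lambda>i. p i + q i)) - Re (Ob D N0 N1 (\<lambda>i. p i - q i) (\<lambda>i. p i - q i))"
  proof -
    have "Re (2 * (Ob D N0 N1 p q + Ob D N0 N1 q p)) = Re (Ob D N0 N1 (\<lambda>i. p i + q i) (\<lambda>i. p i + q i) - Ob D N0 N1 (\<lambda>i. p i - q i) (\<lambda>i. p i - q i))"
      unfolding eq ..
    then show ?thesis by simp
  qed
  then have "2 * Re (Ob D N0 N1 p q + Ob D N0 N1 q p) \<le> nrm D (\<lambda>i. p i + q i) + nrm D (\<lambda>i. p i - q i)"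
    using Ob_diag(1)[of "\<lambda>i. p i + q i"] Ob_diag(1)[of "\<lambda>i. p i - q i"] by linarith
  then show ?thesis using nrm_parallel[of D p q] by simp
qed

lemma Ob_pair: assumes "t > 0"
  shows "Re (Ob D N0 N1 p q + Ob D N0 N1 q p) \<le> t * nrm D p + nrm D q / t"
proof -
  define s where "s = sqrt t"
  have s: "s > 0" "s * s = t" using assms by (auto simp: s_def)
  let ?p = "\<lambda>i. complex_of_real s * p i" and ?q = "\<lambda>i. q i / complex_of_real s"
  have e1: "Ob D N0 N1 ?p ?q = Ob D N0 N1 p q" unfolding Ob_def using s by (simp add: sq_scale)
  have e2: "Ob D N0 N1 ?q ?p = Ob D N0 N1 q p"
  proof -
    have "?q = (\<lambda>i. complex_of_real (1/s) * q i)" by (simp add: field_simps)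
    moreover have "?p = (\<lambda>i. p i / complex_of_real (1/s))" using s by (simp add: field_simps)
    ultimately show ?thesis unfolding Ob_def using s sq_scale[of "1/s" D _ q p] by simp
  qed
  have n1: "nrm D ?p = t * nrm D p" using nrm_scale[of D "complex_of_real s" p] s by (simp add: power2_eq_square)
  have n2: "nrm D ?q = nrm D q / t"
  proof -
    have "?q = (\<lambda>i. complex_of_real (1/s) * q i)" by (simp add: field_simps)
    moreover have "cmod (complex_of_real (1/s)) ^ 2 = 1 / t" using s by (simp add: power2_eq_square norm_divide)
    ultimately show ?thesis using nrm_scale[of D "complex_of_real (1/s)" q] by simp
  qed
  show ?thesis using Ob_pair_basic[of ?p ?q] unfolding e1 e2 n1 n2 .
qed

end



lemma qubit_eq: "qubit = {0, 1::nat}" by (auto simp: qubit_def)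

lemma qform_tens_qubit:
  "qform (qubit \<times> D) (tens A B) v = (\<Sum>a\<in>qubit. \<Sum>a'\<in>qubit. A a a' * sq D B (\<lambda>j. v (a, j)) (\<lambda>j. v (a', j)))"
proof -
  have "qform (qubit \<times> D) (tens A B) v = (\<Sum>a\<in>qubit. \<Sum>b\<in>D. \<Sum>a'\<in>qubit. \<Sum>b'\<in>D. A a a' * (cnj (v (a, b)) * B b b' * v (a', b')))"
    unfolding qform_def tens_def sum_pair by (simp add: mult_ac)
  also have "\<dots> = (\<Sum>a\<in>qubit. \<Sum>a'\<in>qubit. \<Sum>b\<in>D. \<Sum>b'\<in>D. A a a' * (cnj (v (a, b)) * B b b' * v (a', b')))"
    by (rule sum.cong[OF refl], rule sum.swap)
  also have "\<dots> = (\<Sum>a\<in>qubit. \<Sum>a'\<in>qubit. A a a' * sq D B (\<lambda>j. v (a, j)) (\<lambda>j. v (a', j)))"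
    unfolding sq_def by (simp add: sum_distrib_left)
  finally show ?thesis .
qed

definition kAB :: "nat set \<Rightarrow> (nat \<Rightarrow> nat \<Rightarrow> nat op) \<Rightarrow> nat \<Rightarrow> nat \<Rightarrow> (nat \<times> nat \<Rightarrow> complex) \<Rightarrow> complex" where
  "kAB D N x y v = (\<Sum>a\<in>{0,1}. \<Sum>b\<in>{0,1}. (-1)^(a+b) * qform (qubit \<times> D) (tens (alice_proj x a) (N y b)) v)"

lemma kAB0: "kAB D N 0 y v = Ob D (N y 0) (N y 1) (\<lambda>j. v (0, j)) (\<lambda>j. v (1, j)) + Ob D (N y 0) (N y 1) (\<lambda>j. v (1, j)) (\<lambda>j. v (0, j))"
  unfolding kAB_def qform_tens_qubit unfolding qubit_eq
  by (simp add: alice_proj_def alice_obs_def sigma_x_def Ob_def algebra_simps)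

lemma kAB1: "kAB D N 1 y v = - \<i> * Ob D (N y 0) (N y 1) (\<lambda>j. v (0, j)) (\<lambda>j. v (1, j)) + \<i> * Ob D (N y 0) (N y 1) (\<lambda>j. v (1, j)) (\<lambda>j. v (0, j))"
  unfolding kAB_def qform_tens_qubit unfolding qubit_eq
  by (simp add: alice_proj_def alice_obs_def sigma_y_def Ob_def algebra_simps)

lemma Ob_scale_r: "Ob D N0 N1 p (\<lambda>i. c * q i) = c * Ob D N0 N1 p q"
  unfolding Ob_def sq_scale_r by (simp add: algebra_simps)
lemma Ob_scale_l: "Ob D N0 N1 (\<lambda>i. c * p i) q = cnj c * Ob D N0 N1 p q"
  unfolding Ob_def sq_scale_l by (simp add: algebra_simps)

lemma nrm_qubit: "nrm (qubit \<times> D) v = nrm D (\<lambda>j. v (0, j)) + nrm D (\<lambda>j. v (1, j))"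
  unfolding nrm_def sum_pair qubit_eq by simp

lemma cmod_sq_ri: "(cmod (complex_of_real a + \<i> * complex_of_real b))^2 = a^2 + b^2"
  by (simp add: cmod_power2)
lemma cmod_sq_ri': "(cmod (complex_of_real a - \<i> * complex_of_real b))^2 = a^2 + b^2"
  by (simp add: cmod_power2)

lemma VL_AB:
  assumes P0: "povm_pair D (N 0 0) (N 0 1)" and P1: "povm_pair D (N 1 0) (N 1 1)"
    and k0: "\<bar>k0\<bar> \<le> 1" and k1: "\<bar>k1\<bar> \<le> 1"
  shows "Re (complex_of_real k1 * kAB D N 0 0 v + complex_of_real k0 * kAB D N 0 1 v
           + complex_of_real k0 * kAB D N 1 0 v - complex_of_real k1 * kAB D N 1 1 v)
         \<le> 2 * sqrt 2 * nrm (qubit \<times> D) v"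
proof -
  define u0 where "u0 = (\<lambda>j. v (0, j))"
  define u1 where "u1 = (\<lambda>j. v (1, j))"
  define c0 where "c0 = complex_of_real k1 - \<i> * complex_of_real k0"
  define c1 where "c1 = complex_of_real k0 + \<i> * complex_of_real k1"
  define w0 where "w0 = (\<lambda>i. c0 * u1 i)"
  define w1 where "w1 = (\<lambda>i. c1 * u1 i)"
  have cc0: "cnj c0 = complex_of_real k1 + \<i> * complex_of_real k0" by (simp add: c0_def)
  have cc1: "cnj c1 = complex_of_real k0 - \<i> * complex_of_real k1" by (simp add: c1_def)
  have expr: "complex_of_real k1 * kAB D N 0 0 v + complex_of_real k0 * kAB D N 0 1 v
           + complex_of_real k0 * kAB D N 1 0 v - complex_of_real k1 * kAB D N 1 1 v
        = (Ob D (N 0 0) (N 0 1) u0 w0 + Ob D (N 0 0) (N 0 1) w0 u0)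
        + (Ob D (N 1 0) (N 1 1) u0 w1 + Ob D (N 1 0) (N 1 1) w1 u0)"
    unfolding kAB0 kAB1 w0_def w1_def Ob_scale_r Ob_scale_l cc0 cc1
    unfolding c0_def c1_def u0_def u1_def by (simp add: algebra_simps)
  have t: "sqrt 2 > (0::real)" by simp
  have b0: "Re (Ob D (N 0 0) (N 0 1) u0 w0 + Ob D (N 0 0) (N 0 1) w0 u0) \<le> sqrt 2 * nrm D u0 + nrm D w0 / sqrt 2"
    using povm_pair.Ob_pair[OF P0 t] by blast
  have b1: "Re (Ob D (N 1 0) (N 1 1) u0 w1 + Ob D (N 1 0) (N 1 1) w1 u0) \<le> sqrt 2 * nrm D u0 + nrm D w1 / sqrt 2"
    using povm_pair.Ob_pair[OF P1 t] by blast
  have kk: "k0^2 + k1^2 \<le> 2"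
  proof -
    have "k0^2 \<le> 1" "k1^2 \<le> 1" using k0 k1 by (auto simp: abs_le_square_iff[of _ 1, simplified])
    then show ?thesis by simp
  qed
  have n0: "nrm D w0 \<le> 2 * nrm D u1"
  proof -
    have "nrm D w0 = (k0^2 + k1^2) * nrm D u1" unfolding w0_def nrm_scale c0_def cmod_sq_ri' by simp
    then show ?thesis using kk nrm_nonneg[of D u1] by (simp add: mult_right_mono)
  qed
  have n1: "nrm D w1 \<le> 2 * nrm D u1"
  proof -
    have "nrm D w1 = (k0^2 + k1^2) * nrm D u1" unfolding w1_def nrm_scale c1_def cmod_sq_ri by simp
    then show ?thesis using kk nrm_nonneg[of D u1] by (simp add: mult_right_mono)
  qed
  have s2: "2 / sqrt 2 = sqrt (2::real)" by (simp add: field_simps)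
  have "Re ((Ob D (N 0 0) (N 0 1) u0 w0 + Ob D (N 0 0) (N 0 1) w0 u0)
        + (Ob D (N 1 0) (N 1 1) u0 w1 + Ob D (N 1 0) (N 1 1) w1 u0))
        \<le> 2 * sqrt 2 * nrm D u0 + (nrm D w0 + nrm D w1) / sqrt 2"
    using b0 b1 by (simp add: add_divide_distrib)
  also have "\<dots> \<le> 2 * sqrt 2 * nrm D u0 + (4 * nrm D u1) / sqrt 2"
    using n0 n1 by (intro add_left_mono divide_right_mono) auto
  also have "\<dots> = 2 * sqrt 2 * (nrm D u0 + nrm D u1)"
    using s2 by (simp add: field_simps)
  finally show ?thesis unfolding expr nrm_qubit u0_def u1_def .
qed



lemma sum_list_mult: "(\<Sum>v\<leftarrow>vs. f v) * (c::complex) = (\<Sum>v\<leftarrow>vs. f v * c)"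
  by (induction vs) (auto simp: algebra_simps)

lemma Re_sum_list_nonneg: "(\<And>v. Re (f v) \<ge> 0) \<Longrightarrow> Re (\<Sum>v\<leftarrow>vs. f v) \<ge> 0"
  by (induction vs) auto
lemma Im_sum_list_zero: "(\<And>v. Im (f v) = 0) \<Longrightarrow> Im (\<Sum>v\<leftarrow>vs. f v) = 0"
  by (induction vs) auto

lemma tens_psd:
  assumes fin: "finite D" and P: "psd_on D N" and P': "psd_on D N'"
  shows "Im (qform (D \<times> D) (tens N N') v) = 0 \<and> Re (qform (D \<times> D) (tens N N') v) \<ge> 0"
proof -
  obtain ws where ws: "\<forall>i\<in>D. \<forall>j\<in>D. N' i j = (\<Sum>w\<leftarrow>ws. w i * cnj (w j))"
    using psd_decomp[OF fin P'] by blast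
  define u where "u w = (\<lambda>b. \<Sum>c\<in>D. cnj (w c) * v (b, c))" for w :: "'a \<Rightarrow> complex"
  have "qform (D \<times> D) (tens N N') v = (\<Sum>b\<in>D. \<Sum>c\<in>D. \<Sum>b'\<in>D. \<Sum>c'\<in>D. cnj (v (b, c)) * N b b' * N' c c' * v (b', c'))"
    unfolding qform_def tens_def sum_pair by (simp add: mult_ac)
  also have "\<dots> = (\<Sum>b\<in>D. \<Sum>b'\<in>D. \<Sum>c\<in>D. \<Sum>c'\<in>D. cnj (v (b, c)) * N b b' * N' c c' * v (b', c'))"
    by (rule sum.cong[OF refl], rule sum.swap)
  also have "\<dots> = (\<Sum>b\<in>D. \<Sum>b'\<in>D. \<Sum>c\<in>D. \<Sum>c'\<in>D. \<Sum>w\<leftarrow>ws. (w c * cnj (v (b, c))) * N b b' * (cnj (w c') * v (b', c')))"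
    using ws by (intro sum.cong refl) (simp add: mult_sum_list sum_list_mult mult_ac)
  also have "\<dots> = (\<Sum>w\<leftarrow>ws. \<Sum>b\<in>D. \<Sum>b'\<in>D. \<Sum>c\<in>D. \<Sum>c'\<in>D. (w c * cnj (v (b, c))) * N b b' * (cnj (w c') * v (b', c')))"
    by (simp only: sum_sum_list_swap)
  also have "\<dots> = (\<Sum>w\<leftarrow>ws. qform D N (u w))"
    unfolding qform_def u_def by (simp add: sum_distrib_left sum_distrib_right mult_ac)
  finally have e: "qform (D \<times> D) (tens N N') v = (\<Sum>w\<leftarrow>ws. qform D N (u w))" .
  show ?thesis unfolding e using P unfolding psd_on_def
    by (auto intro!: Re_sum_list_nonneg Im_sum_list_zero)
qed



lemma qform_add: "qform I (\<lambda>i j. A i j + B i j) v = qform I A v + qform I B v"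
  unfolding qform_def by (simp add: sum.distrib[symmetric] algebra_simps)

lemma qform_mat_cong: "(\<And>i j. i \<in> I \<Longrightarrow> j \<in> I \<Longrightarrow> A i j = B i j) \<Longrightarrow> qform I A v = qform I B v"
  unfolding qform_def by (intro sum.cong refl) auto

lemma qform_id: assumes "finite I" shows "qform I (\<lambda>i j. if i = j then 1 else 0) v = complex_of_real (nrm I v)"
proof -
  have "qform I (\<lambda>i j. if i = j then 1 else 0) v = (\<Sum>i\<in>I. cnj (v i) * v i)"
    unfolding qform_def using assms by (intro sum.cong refl) (simp add: if_distrib if_distribR cong: if_cong)
  also have "\<dots> = complex_of_real (nrm I v)" unfolding nrm_def by (simp add: cnj_mult_self del: of_real_power)
  finally show ?thesis .
qed

definition kBC :: "nat set \<Rightarrow> (nat \<Rightarrow> nat \<Rightarrow> nat op) \<Rightarrow> (nat \<Rightarrow> nat \<Rightarrow> nat op) \<Rightarrow> nat \<Rightarrow> nat \<Rightarrow> (nat \<times> nat \<Rightarrow> complex) \<Rightarrow> complex" where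
  "kBC D N N' y z v = (\<Sum>b\<in>{0,1}. \<Sum>c\<in>{0,1}. (-1)^(b+c) * qform (D \<times> D) (tens (N y b) (N' z c)) v)"

lemma VL_BC:
  assumes P: "povm_pair D (N y 0) (N y 1)" and P': "povm_pair D (N' z 0) (N' z 1)"
  shows "Im (kBC D N N' y z v) = 0" "\<bar>Re (kBC D N N' y z v)\<bar> \<le> nrm (D \<times> D) v"
proof -
  have fin: "finite D" using povm_pair.fin[OF P] .
  let ?q = "\<lambda>b c. qform (D \<times> D) (tens (N y b) (N' z c)) v"
  have pos: "Im (?q b c) = 0 \<and> Re (?q b c) \<ge> 0" if "b \<in> {0,1}" "c \<in> {0,1}" for b c
  proof -
    have "psd_on D (N y b)" using that povm_pair.psd0[OF P] povm_pair.psd1[OF P] by auto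
    moreover have "psd_on D (N' z c)" using that povm_pair.psd0[OF P'] povm_pair.psd1[OF P'] by auto
    ultimately show ?thesis using tens_psd[OF fin] by blast
  qed
  have "?q 0 0 + ?q 0 1 + ?q 1 0 + ?q 1 1 = qform (D \<times> D) (\<lambda>i j. tens (N y 0) (N' z 0) i j + tens (N y 0) (N' z 1) i j
      + tens (N y 1) (N' z 0) i j + tens (N y 1) (N' z 1) i j) v"
    by (simp add: qform_add)
  also have "\<dots> = qform (D \<times> D) (\<lambda>i j. if i = j then 1 else 0) v"
  proof (rule qform_mat_cong)
    fix i j assume "i \<in> D \<times> D" "j \<in> D \<times> D"
    then obtain i1 i2 j1 j2 where ij: "i = (i1, i2)" "j = (j1, j2)" "i1 \<in> D" "i2 \<in> D" "j1 \<in> D" "j2 \<in> D" by auto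
    have s1: "N y 0 i1 j1 + N y 1 i1 j1 = (if i1 = j1 then 1 else 0)" using povm_pair.sumI[OF P ij(3) ij(5)] .
    have s2: "N' z 0 i2 j2 + N' z 1 i2 j2 = (if i2 = j2 then 1 else 0)" using povm_pair.sumI[OF P' ij(4) ij(6)] .
    have "tens (N y 0) (N' z 0) i j + tens (N y 0) (N' z 1) i j + tens (N y 1) (N' z 0) i j + tens (N y 1) (N' z 1) i j
       = (N y 0 i1 j1 + N y 1 i1 j1) * (N' z 0 i2 j2 + N' z 1 i2 j2)"
      unfolding ij tens_def by (simp add: algebra_simps)
    also have "\<dots> = (if i = j then 1 else 0)" unfolding s1 s2 ij by auto
    finally show "tens (N y 0) (N' z 0) i j + tens (N y 0) (N' z 1) i j + tens (N y 1) (N' z 0) i j + tens (N y 1) (N' z 1) i j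
       = (if i = j then 1 else 0)" .
  qed
  also have "\<dots> = complex_of_real (nrm (D \<times> D) v)" using qform_id[OF finite_cartesian_product[OF fin fin]] .
  finally have tot0: "?q 0 0 + ?q 0 1 + ?q 1 0 + ?q 1 1 = complex_of_real (nrm (D \<times> D) v)" .
  have tot: "Re (?q 0 0) + Re (?q 0 1) + Re (?q 1 0) + Re (?q 1 1) = nrm (D \<times> D) v"
    using arg_cong[where f=Re, OF tot0] by (simp only: plus_complex.sel Re_complex_of_real)
  have k: "kBC D N N' y z v = ?q 0 0 - ?q 0 1 - ?q 1 0 + ?q 1 1" unfolding kBC_def by simp
  have p00: "Im (?q 0 0) = 0 \<and> Re (?q 0 0) \<ge> 0" using pos by simp
  have p01: "Im (?q 0 1) = 0 \<and> Re (?q 0 1) \<ge> 0" using pos by simp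
  have p10: "Im (?q 1 0) = 0 \<and> Re (?q 1 0) \<ge> 0" using pos by simp
  have p11: "Im (?q 1 1) = 0 \<and> Re (?q 1 1) \<ge> 0" using pos by simp
  show "Im (kBC D N N' y z v) = 0" unfolding k using p00 p01 p10 p11 by simp
  show "\<bar>Re (kBC D N N' y z v)\<bar> \<le> nrm (D \<times> D) v" unfolding k using p00 p01 p10 p11 tot by (auto simp: abs_le_iff)
qed

definition kA :: "nat \<Rightarrow> (nat \<Rightarrow> complex) \<Rightarrow> complex" where
  "kA x v = (\<Sum>a\<in>{0,1}. (-1)^a * qform qubit (alice_proj x a) v)"

lemma kA0: "kA 0 v = cnj (v 0) * v 1 + cnj (v 1) * v 0"
  unfolding kA_def qform_def qubit_eq by (simp add: alice_proj_def alice_obs_def sigma_x_def algebra_simps)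
lemma kA1: "kA 1 v = - \<i> * (cnj (v 0) * v 1) + \<i> * (cnj (v 1) * v 0)"
  unfolding kA_def qform_def qubit_eq by (simp add: alice_proj_def alice_obs_def sigma_y_def algebra_simps)

lemma cs2: assumes "\<bar>s\<bar> \<le> 1" "\<bar>t\<bar> \<le> 1" shows "s * x + t * y \<le> sqrt 2 * sqrt (x^2 + y^2)"
proof -
  have st: "s^2 + t^2 \<le> 2"
  proof -
    have "s^2 \<le> 1" "t^2 \<le> 1" using assms by (auto simp: abs_le_square_iff[of _ 1, simplified])
    then show ?thesis by simp
  qed
  have c: "(s*x+t*y)^2 + (s*y - t*x)^2 = (s^2+t^2)*(x^2+y^2)" by (simp add: power2_eq_square algebra_simps)
  have "(s * x + t * y)^2 \<le> (s^2+t^2)*(x^2+y^2)" using c by (smt (verit) zero_le_power2)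
  also have "\<dots> \<le> 2 * (x^2 + y^2)" using st by (intro mult_right_mono) auto
  finally have "(s * x + t * y)^2 \<le> 2 * (x^2 + y^2)" .
  then have "s * x + t * y \<le> sqrt (2 * (x^2 + y^2))" using real_le_rsqrt by blast
  then show ?thesis by (simp only: real_sqrt_mult)
qed

lemma VL_A: assumes "\<bar>s\<bar> \<le> 1" "\<bar>t\<bar> \<le> 1"
  shows "Im (kA 0 v) = 0" "Im (kA 1 v) = 0" "s * Re (kA 0 v) + t * Re (kA 1 v) \<le> sqrt 2 * nrm qubit v"
proof -
  define z where "z = cnj (v 0) * v 1"
  have cz: "cnj (v 1) * v 0 = cnj z" by (simp add: z_def)
  have e0: "kA 0 v = 2 * complex_of_real (Re z)" unfolding kA0 cz[unfolded z_def] z_def[symmetric]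
    by (simp add: complex_add_cnj)
  have e1: "kA 1 v = 2 * complex_of_real (Im z)" unfolding kA1 cz[unfolded z_def] z_def[symmetric]
    by (simp add: complex_eq_iff)
  show "Im (kA 0 v) = 0" "Im (kA 1 v) = 0" unfolding e0 e1 by simp_all
  have nz0: "sqrt ((Re z)^2 + (Im z)^2) = cmod z" by (simp only: cmod_def)
  have nz: "sqrt ((Re z)^2 + (Im z)^2) = cmod (v 0) * cmod (v 1)" unfolding nz0 by (simp add: z_def norm_mult)
  have am: "2 * (cmod (v 0) * cmod (v 1)) \<le> (cmod (v 0))^2 + (cmod (v 1))^2"
    using sum_squares_bound[of "cmod (v 0)" "cmod (v 1)"] by simp
  have "s * Re (kA 0 v) + t * Re (kA 1 v) = 2 * (s * Re z + t * Im z)" unfolding e0 e1 by simp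
  also have "\<dots> \<le> 2 * (sqrt 2 * (cmod (v 0) * cmod (v 1)))" using cs2[OF assms, of "Re z" "Im z"] nz by simp
  also have "\<dots> \<le> sqrt 2 * ((cmod (v 0))^2 + (cmod (v 1))^2)"
    using mult_left_mono[OF am, of "sqrt 2"] by (simp add: algebra_simps)
  also have "\<dots> = sqrt 2 * nrm qubit v" unfolding nrm_def qubit_eq by simp
  finally show "s * Re (kA 0 v) + t * Re (kA 1 v) \<le> sqrt 2 * nrm qubit v" .
qed



lemma sum_list_real_mult: "(\<Sum>v\<leftarrow>vs. c * f v) = (c::real) * (\<Sum>v\<leftarrow>vs. f v)"
  by (induction vs) (auto simp: algebra_simps)

lemma sum_list_add: "(\<Sum>v\<leftarrow>vs. f v + g v) = (\<Sum>v\<leftarrow>vs. f v) + (\<Sum>v\<leftarrow>vs. (g v :: complex))"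
  by (induction vs) auto
lemma sum_list_diff: "(\<Sum>v\<leftarrow>vs. f v - g v) = (\<Sum>v\<leftarrow>vs. f v) - (\<Sum>v\<leftarrow>vs. (g v :: complex))"
  by (induction vs) auto

lemma nrm_total:
  assumes "trace_on I \<rho> = 1" "trace_on I \<rho> = (\<Sum>v\<leftarrow>vs. complex_of_real (nrm I v))"
  shows "(\<Sum>v\<leftarrow>vs. nrm I v) = 1"
proof -
  have "Re (\<Sum>v\<leftarrow>vs. complex_of_real (nrm I v)) = 1" using assms by simp
  then show ?thesis unfolding Re_sum_list by simp
qed

definition TAB :: "nat set \<Rightarrow> (nat \<Rightarrow> nat \<Rightarrow> nat op) \<Rightarrow> (nat \<times> nat) op \<Rightarrow> nat \<Rightarrow> nat \<Rightarrow> complex" where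
  "TAB D N \<rho> x y = (\<Sum>a\<in>{0,1}. \<Sum>b\<in>{0,1}. (-1)^(a+b) * tr1 (qubit \<times> D) (tens (alice_proj x a) (N y b)) \<rho>)"

lemma comp_AB:
  assumes P0: "povm_pair D (N 0 0) (N 0 1)" and P1: "povm_pair D (N 1 0) (N 1 1)"
    and psd: "psd_on (qubit \<times> D) \<rho>" and tr: "trace_on (qubit \<times> D) \<rho> = 1"
    and k0: "\<bar>k0\<bar> \<le> 1" and k1: "\<bar>k1\<bar> \<le> 1"
  shows "Re (complex_of_real k1 * TAB D N \<rho> 0 0 + complex_of_real k0 * TAB D N \<rho> 0 1
           + complex_of_real k0 * TAB D N \<rho> 1 0 - complex_of_real k1 * TAB D N \<rho> 1 1) \<le> 2 * sqrt 2"
proof -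
  have fin: "finite (qubit \<times> D)" using povm_pair.fin[OF P0] by (simp add: qubit_def)
  obtain vs where vs: "\<And>T. tr1 (qubit \<times> D) T \<rho> = (\<Sum>v\<leftarrow>vs. qform (qubit \<times> D) T v)"
    and tv: "trace_on (qubit \<times> D) \<rho> = (\<Sum>v\<leftarrow>vs. complex_of_real (nrm (qubit \<times> D) v))"
    using tr1_decomp[OF fin psd] by blast
  have T: "TAB D N \<rho> x y = (\<Sum>v\<leftarrow>vs. kAB D N x y v)" for x y
    unfolding TAB_def kAB_def vs by (simp add: mult_sum_list sum_sum_list_swap)
  have "Re (complex_of_real k1 * TAB D N \<rho> 0 0 + complex_of_real k0 * TAB D N \<rho> 0 1
           + complex_of_real k0 * TAB D N \<rho> 1 0 - complex_of_real k1 * TAB D N \<rho> 1 1)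
      = (\<Sum>v\<leftarrow>vs. Re (complex_of_real k1 * kAB D N 0 0 v + complex_of_real k0 * kAB D N 0 1 v
           + complex_of_real k0 * kAB D N 1 0 v - complex_of_real k1 * kAB D N 1 1 v))"
    unfolding T Re_sum_list[symmetric] by (simp add: mult_sum_list sum_list_add sum_list_diff)
  also have "\<dots> \<le> (\<Sum>v\<leftarrow>vs. 2 * sqrt 2 * nrm (qubit \<times> D) v)"
    by (rule sum_list_mono_le, rule VL_AB[OF P0 P1 k0 k1])
  also have "\<dots> = 2 * sqrt 2" unfolding sum_list_real_mult nrm_total[OF tr tv] by simp
  finally show ?thesis .
qed

lemma abs_le_neg: "\<bar>x\<bar> \<le> (y::real) \<Longrightarrow> - y \<le> x" by simp

lemma comp_L:
  assumes P: "povm_pair D N0 N1" and psd: "psd_on D \<rho>" and tr: "trace_on D \<rho> = 1"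
  shows "Im (tr1 D N0 \<rho> - tr1 D N1 \<rho>) = 0" "\<bar>Re (tr1 D N0 \<rho> - tr1 D N1 \<rho>)\<bar> \<le> 1"
proof -
  have fin: "finite D" using povm_pair.fin[OF P] .
  obtain vs where vs: "\<And>T. tr1 D T \<rho> = (\<Sum>v\<leftarrow>vs. qform D T v)"
    and tv: "trace_on D \<rho> = (\<Sum>v\<leftarrow>vs. complex_of_real (nrm D v))"
    using tr1_decomp[OF fin psd] by blast
  have e: "tr1 D N0 \<rho> - tr1 D N1 \<rho> = (\<Sum>v\<leftarrow>vs. Ob D N0 N1 v v)"
    unfolding vs Ob_def qform_sq by (simp add: sum_list_diff)
  show "Im (tr1 D N0 \<rho> - tr1 D N1 \<rho>) = 0" unfolding e
    by (rule Im_sum_list_zero, rule povm_pair.Ob_diag(2)[OF P])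
  have "Re (tr1 D N0 \<rho> - tr1 D N1 \<rho>) \<le> (\<Sum>v\<leftarrow>vs. nrm D v)" unfolding e Re_sum_list
    by (rule sum_list_mono_le, rule abs_le_D1, rule povm_pair.Ob_diag(1)[OF P])
  moreover have "- Re (tr1 D N0 \<rho> - tr1 D N1 \<rho>) \<le> (\<Sum>v\<leftarrow>vs. nrm D v)"
  proof -
    have "(\<Sum>v\<leftarrow>vs. - nrm D v) \<le> Re (tr1 D N0 \<rho> - tr1 D N1 \<rho>)" unfolding e Re_sum_list
      by (rule sum_list_mono_le, rule abs_le_neg, rule povm_pair.Ob_diag(1)[OF P])
    moreover have "(\<Sum>v\<leftarrow>vs. - nrm D v) = - (\<Sum>v\<leftarrow>vs. nrm D v)" using sum_list_real_mult[of "-1"] by simp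
    ultimately show ?thesis by simp
  qed
  ultimately show "\<bar>Re (tr1 D N0 \<rho> - tr1 D N1 \<rho>)\<bar> \<le> 1" using nrm_total[OF tr tv] by simp
qed

definition TA :: "nat op \<Rightarrow> nat \<Rightarrow> complex" where
  "TA \<rho> x = (\<Sum>a\<in>{0,1}. (-1)^a * tr1 qubit (alice_proj x a) \<rho>)"

definition TBC :: "nat set \<Rightarrow> (nat \<Rightarrow> nat \<Rightarrow> nat op) \<Rightarrow> (nat \<Rightarrow> nat \<Rightarrow> nat op) \<Rightarrow> (nat \<times> nat) op \<Rightarrow> nat \<Rightarrow> nat \<Rightarrow> complex" where
  "TBC D N N' \<rho> y z = (\<Sum>b\<in>{0,1}. \<Sum>c\<in>{0,1}. (-1)^(b+c) * tr1 (D \<times> D) (tens (N y b) (N' z c)) \<rho>)"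

lemma comp_A:
  assumes P: "\<And>y. y \<in> {0,1} \<Longrightarrow> povm_pair D (N y 0) (N y 1)"
    and P': "\<And>z. z \<in> {0,1} \<Longrightarrow> povm_pair D (N' z 0) (N' z 1)"
    and psdA: "psd_on qubit \<rho>A" and trA: "trace_on qubit \<rho>A = 1"
    and psdB: "psd_on (D \<times> D) \<rho>B" and trB: "trace_on (D \<times> D) \<rho>B = 1"
  shows "Re (TA \<rho>A 0 * (TBC D N N' \<rho>B 0 1 + TBC D N N' \<rho>B 1 0) + TA \<rho>A 1 * (TBC D N N' \<rho>B 0 0 - TBC D N N' \<rho>B 1 1)) \<le> 2 * sqrt 2"
proof -
  have fin: "finite D" using povm_pair.fin[OF P[of 0]] by simp
  have finq: "finite qubit" by (simp add: qubit_def)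
  obtain vs where vs: "\<And>T. tr1 qubit T \<rho>A = (\<Sum>v\<leftarrow>vs. qform qubit T v)"
    and tv: "trace_on qubit \<rho>A = (\<Sum>v\<leftarrow>vs. complex_of_real (nrm qubit v))"
    using tr1_decomp[OF finq psdA] by blast
  obtain ws where ws: "\<And>T. tr1 (D \<times> D) T \<rho>B = (\<Sum>v\<leftarrow>ws. qform (D \<times> D) T v)"
    and tw: "trace_on (D \<times> D) \<rho>B = (\<Sum>v\<leftarrow>ws. complex_of_real (nrm (D \<times> D) v))"
    using tr1_decomp[OF finite_cartesian_product[OF fin fin] psdB] by blast
  have TAe: "TA \<rho>A x = (\<Sum>v\<leftarrow>vs. kA x v)" for x
    unfolding TA_def kA_def vs by (simp add: mult_sum_list sum_sum_list_swap)
  have TBCe: "TBC D N N' \<rho>B y z = (\<Sum>v\<leftarrow>ws. kBC D N N' y z v)" for y z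
    unfolding TBC_def kBC_def ws by (simp add: mult_sum_list sum_sum_list_swap)
  have ImA: "Im (TA \<rho>A x) = 0" if "x \<in> {0,1}" for x
    unfolding TAe Im_sum_list using that VL_A(1,2)[of 0 0] by (auto intro: sum_list_zero')
  have AB: "s * Re (TA \<rho>A 0) + t * Re (TA \<rho>A 1) \<le> sqrt 2" if "\<bar>s\<bar> \<le> 1" "\<bar>t\<bar> \<le> 1" for s t
  proof -
    have "s * Re (TA \<rho>A 0) + t * Re (TA \<rho>A 1) = (\<Sum>v\<leftarrow>vs. s * Re (kA 0 v) + t * Re (kA 1 v))"
      unfolding TAe Re_sum_list by (induction vs) (auto simp: algebra_simps)
    also have "\<dots> \<le> (\<Sum>v\<leftarrow>vs. sqrt 2 * nrm qubit v)"
      by (rule sum_list_mono_le, rule VL_A(3)[OF that])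
    also have "\<dots> = sqrt 2" unfolding sum_list_real_mult nrm_total[OF trA tv] by simp
    finally show ?thesis .
  qed
  have ImB: "Im (TBC D N N' \<rho>B y z) = 0" if "y \<in> {0,1}" "z \<in> {0,1}" for y z
    unfolding TBCe Im_sum_list using VL_BC(1)[where D=D and N=N and y=y and N'=N' and z=z, OF P[OF that(1)] P'[OF that(2)]] by (auto intro: sum_list_zero')
  have ReB: "\<bar>Re (TBC D N N' \<rho>B y z)\<bar> \<le> 1" if "y \<in> {0,1}" "z \<in> {0,1}" for y z
  proof -
    have b: "\<bar>Re (kBC D N N' y z v)\<bar> \<le> nrm (D \<times> D) v" for v using VL_BC(2)[where D=D and N=N and y=y and N'=N' and z=z, OF P[OF that(1)] P'[OF that(2)]] .
    have "Re (TBC D N N' \<rho>B y z) \<le> (\<Sum>v\<leftarrow>ws. nrm (D \<times> D) v)" unfolding TBCe Re_sum_list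
      by (rule sum_list_mono_le, rule abs_le_D1, rule b)
    moreover have "(\<Sum>v\<leftarrow>ws. - nrm (D \<times> D) v) \<le> Re (TBC D N N' \<rho>B y z)" unfolding TBCe Re_sum_list
      by (rule sum_list_mono_le, rule abs_le_neg, rule b)
    moreover have "(\<Sum>v\<leftarrow>ws. - nrm (D \<times> D) v) = - (\<Sum>v\<leftarrow>ws. nrm (D \<times> D) v)" using sum_list_real_mult[of "-1"] by simp
    ultimately show ?thesis using nrm_total[OF trB tw] by simp
  qed
  define s where "s = (Re (TBC D N N' \<rho>B 0 1) + Re (TBC D N N' \<rho>B 1 0)) / 2"
  define t where "t = (Re (TBC D N N' \<rho>B 0 0) - Re (TBC D N N' \<rho>B 1 1)) / 2"
  have s1: "\<bar>s\<bar> \<le> 1" using ReB[of 0 1] ReB[of 1 0] by (simp add: s_def abs_le_iff)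
  have t1: "\<bar>t\<bar> \<le> 1" using ReB[of 0 0] ReB[of 1 1] by (simp add: t_def abs_le_iff)
  have "Re (TA \<rho>A 0 * (TBC D N N' \<rho>B 0 1 + TBC D N N' \<rho>B 1 0) + TA \<rho>A 1 * (TBC D N N' \<rho>B 0 0 - TBC D N N' \<rho>B 1 1))
     = 2 * (s * Re (TA \<rho>A 0) + t * Re (TA \<rho>A 1))"
    using ImA[of 0] ImA[of 1] by (simp add: s_def t_def algebra_simps add_divide_distrib diff_divide_distrib)
  also have "\<dots> \<le> 2 * sqrt 2" using AB[OF s1 t1] by simp
  finally show ?thesis .
qed



definition TL :: "nat set \<Rightarrow> (nat \<Rightarrow> nat \<Rightarrow> nat op) \<Rightarrow> nat op \<Rightarrow> nat \<Rightarrow> complex" where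
  "TL D N \<rho> y = tr1 D (N y 0) \<rho> - tr1 D (N y 1) \<rho>"

lemma povm_pair_of: "povm2_on D M \<Longrightarrow> finite D \<Longrightarrow> povm_pair D (M 0) (M 1)"
  unfolding povm2_on_def by (unfold_locales) auto

lemma mermin_val:
  "(\<Sum>a\<in>{0,1}. \<Sum>b\<in>{0,1}. \<Sum>c\<in>{0,1::nat}. (-1)^(a+b+c) * complex_of_real (mermin V a b c 0 0 1))
 + (\<Sum>a\<in>{0,1}. \<Sum>b\<in>{0,1}. \<Sum>c\<in>{0,1::nat}. (-1)^(a+b+c) * complex_of_real (mermin V a b c 0 1 0))
 + (\<Sum>a\<in>{0,1}. \<Sum>b\<in>{0,1}. \<Sum>c\<in>{0,1::nat}. (-1)^(a+b+c) * complex_of_real (mermin V a b c 1 0 0))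
 - (\<Sum>a\<in>{0,1}. \<Sum>b\<in>{0,1}. \<Sum>c\<in>{0,1::nat}. (-1)^(a+b+c) * complex_of_real (mermin V a b c 1 1 1))
 = complex_of_real (4 * V)"
  by (simp add: mermin_def field_simps)

lemma E_expand:
  assumes "\<forall>a\<in>{0,1}. \<forall>b\<in>{0,1}. \<forall>c\<in>{0,1}. Pm a b c = (\<Sum>l<n. of_real (p l) * (tA l a * tBC l b c)
     + of_real (q l) * (tAC l a c * tB l b) + of_real (r l) * (tAB l a b * tC l c))"
  shows "(\<Sum>a\<in>{0,1}. \<Sum>b\<in>{0,1}. \<Sum>c\<in>{0,1::nat}. (-1)^(a+b+c) * Pm a b c) =
    (\<Sum>l<n. of_real (p l) * ((\<Sum>a\<in>{0,1}. (-1)^a * tA l a) * (\<Sum>b\<in>{0,1}. \<Sum>c\<in>{0,1}. (-1)^(b+c) * tBC l b c))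
      + of_real (q l) * ((\<Sum>a\<in>{0,1}. \<Sum>c\<in>{0,1}. (-1)^(a+c) * tAC l a c) * (\<Sum>b\<in>{0,1}. (-1)^b * tB l b))
      + of_real (r l) * ((\<Sum>a\<in>{0,1}. \<Sum>b\<in>{0,1}. (-1)^(a+b) * tAB l a b) * (\<Sum>c\<in>{0,1}. (-1)^c * tC l c)))"
proof -
  let ?F = "\<lambda>l a b c. of_real (p l) * (tA l a * tBC l b c)
     + of_real (q l) * (tAC l a c * tB l b) + of_real (r l) * (tAB l a b * tC l c)"
  have "(\<Sum>a\<in>{0,1}. \<Sum>b\<in>{0,1}. \<Sum>c\<in>{0,1::nat}. (-1)^(a+b+c) * Pm a b c)
      = (\<Sum>a\<in>{0,1}. \<Sum>b\<in>{0,1}. \<Sum>c\<in>{0,1::nat}. (-1)^(a+b+c) * (\<Sum>l<n. ?F l a b c))"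
    using assms by (intro sum.cong refl) auto
  also have "\<dots> = (\<Sum>l<n. \<Sum>a\<in>{0,1}. \<Sum>b\<in>{0,1}. \<Sum>c\<in>{0,1::nat}. (-1)^(a+b+c) * ?F l a b c)"
    by (simp only: sum_distrib_left sum.swap[of _ "{..<n}"])
  also have "\<dots> = (\<Sum>l<n. of_real (p l) * ((\<Sum>a\<in>{0,1}. (-1)^a * tA l a) * (\<Sum>b\<in>{0,1}. \<Sum>c\<in>{0,1}. (-1)^(b+c) * tBC l b c))
      + of_real (q l) * ((\<Sum>a\<in>{0,1}. \<Sum>c\<in>{0,1}. (-1)^(a+c) * tAC l a c) * (\<Sum>b\<in>{0,1}. (-1)^b * tB l b))
      + of_real (r l) * ((\<Sum>a\<in>{0,1}. \<Sum>b\<in>{0,1}. (-1)^(a+b) * tAB l a b) * (\<Sum>c\<in>{0,1}. (-1)^c * tC l c)))"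
    by (intro sum.cong refl) (simp add: algebra_simps)
  finally show ?thesis .
qed

lemma hard_dir:
  fixes V :: real
  assumes d1: "1 \<le> d" and bs: "biseparable d \<rho>"
    and PN: "\<forall>y\<in>{0,1}. povm2_on {0..<d} (N y)" and PN': "\<forall>z\<in>{0,1}. povm2_on {0..<d} (N' z)"
    and prob: "\<forall>a\<in>{0,1}. \<forall>b\<in>{0,1}. \<forall>c\<in>{0,1}. \<forall>x\<in>{0,1}. \<forall>y\<in>{0,1}. \<forall>z\<in>{0,1}.
             complex_of_real (mermin V a b c x y z) =
               tri_prob d \<rho> (alice_proj x a) (N y b) (N' z c)"
  shows "4 * V \<le> 2 * sqrt 2"
proof -
  define D where "D = {0..<d}"
  have fin: "finite D" by (simp add: D_def)
  have PB: "povm_pair D (N y 0) (N y 1)" if "y \<in> {0,1}" for y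
    using povm_pair_of[OF _ fin] PN that unfolding D_def by blast
  have PC: "povm_pair D (N' z 0) (N' z 1)" if "z \<in> {0,1}" for z
    using povm_pair_of[OF _ fin] PN' that unfolding D_def by blast
  obtain n p q r \<rho>A \<rho>BC \<rho>AC \<rho>B \<rho>AB \<rho>C where
    w: "\<forall>l<(n::nat). 0 \<le> p l \<and> 0 \<le> q l \<and> 0 \<le> r l" and ws: "(\<Sum>l<n. p l + q l + r l) = 1"
    and st: "\<forall>l<n. state_on qubit (\<rho>A l) \<and> state_on ({0..<d} \<times> {0..<d}) (\<rho>BC l) \<and>
              state_on (qubit \<times> {0..<d}) (\<rho>AC l) \<and> state_on {0..<d} (\<rho>B l) \<and>
              state_on (qubit \<times> {0..<d}) (\<rho>AB l) \<and> state_on {0..<d} (\<rho>C l)"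
    and rho: "\<forall>(a, b, c) \<in> tri_index d. \<forall>(a', b', c') \<in> tri_index d.
          \<rho> (a, b, c) (a', b', c') =
            (\<Sum>l<n. of_real (p l) * \<rho>A l a a' * \<rho>BC l (b, c) (b', c')
                  + of_real (q l) * \<rho>AC l (a, c) (a', c') * \<rho>B l b b'
                  + of_real (r l) * \<rho>AB l (a, b) (a', b') * \<rho>C l c c')"
    using bs unfolding biseparable_def by (elim exE conjE) (rule that, assumption+)
  note fact = tri_prob_bisep[OF rho]
  define E where "E x y z = (\<Sum>a\<in>{0,1}. \<Sum>b\<in>{0,1}. \<Sum>c\<in>{0,1::nat}. (-1)^(a+b+c) * complex_of_real (mermin V a b c x y z))" for x y z
  have Ee: "E x y z = (\<Sum>l<n. of_real (p l) * (TA (\<rho>A l) x * TBC D N N' (\<rho>BC l) y z)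
      + of_real (q l) * (TAB D N' (\<rho>AC l) x z * TL D N (\<rho>B l) y)
      + of_real (r l) * (TAB D N (\<rho>AB l) x y * TL D N' (\<rho>C l) z))"
    if "x \<in> {0,1}" "y \<in> {0,1}" "z \<in> {0,1}" for x y z
  proof -
    have "E x y z = (\<Sum>l<n. of_real (p l) * ((\<Sum>a\<in>{0,1}. (-1)^a * tr1 qubit (alice_proj x a) (\<rho>A l))
           * (\<Sum>b\<in>{0,1}. \<Sum>c\<in>{0,1}. (-1)^(b+c) * tr1 (D \<times> D) (tens (N y b) (N' z c)) (\<rho>BC l)))
      + of_real (q l) * ((\<Sum>a\<in>{0,1}. \<Sum>c\<in>{0,1}. (-1)^(a+c) * tr1 (qubit \<times> D) (tens (alice_proj x a) (N' z c)) (\<rho>AC l))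
           * (\<Sum>b\<in>{0,1}. (-1)^b * tr1 D (N y b) (\<rho>B l)))
      + of_real (r l) * ((\<Sum>a\<in>{0,1}. \<Sum>b\<in>{0,1}. (-1)^(a+b) * tr1 (qubit \<times> D) (tens (alice_proj x a) (N y b)) (\<rho>AB l))
           * (\<Sum>c\<in>{0,1}. (-1)^c * tr1 D (N' z c) (\<rho>C l))))"
      unfolding E_def
    proof (rule E_expand, intro ballI)
      fix a b c :: nat assume abc: "a \<in> {0,1}" "b \<in> {0,1}" "c \<in> {0,1}"
      show "complex_of_real (mermin V a b c x y z) = (\<Sum>l<n. of_real (p l) * (tr1 qubit (alice_proj x a) (\<rho>A l)
           * tr1 (D \<times> D) (tens (N y b) (N' z c)) (\<rho>BC l))
      + of_real (q l) * (tr1 (qubit \<times> D) (tens (alice_proj x a) (N' z c)) (\<rho>AC l) * tr1 D (N y b) (\<rho>B l))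
      + of_real (r l) * (tr1 (qubit \<times> D) (tens (alice_proj x a) (N y b)) (\<rho>AB l) * tr1 D (N' z c) (\<rho>C l)))"
        unfolding prob[rule_format, OF abc that] fact D_def ..
    qed
    also have "\<dots> = (\<Sum>l<n. of_real (p l) * (TA (\<rho>A l) x * TBC D N N' (\<rho>BC l) y z)
      + of_real (q l) * (TAB D N' (\<rho>AC l) x z * TL D N (\<rho>B l) y)
      + of_real (r l) * (TAB D N (\<rho>AB l) x y * TL D N' (\<rho>C l) z))"
      unfolding TA_def TBC_def TAB_def TL_def by simp
    finally show ?thesis .
  qed
  have M: "E 0 0 1 + E 0 1 0 + E 1 0 0 - E 1 1 1 = complex_of_real (4 * V)"
    unfolding E_def by (rule mermin_val)
  define XA where "XA l = TA (\<rho>A l) 0 * (TBC D N N' (\<rho>BC l) 0 1 + TBC D N N' (\<rho>BC l) 1 0)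
       + TA (\<rho>A l) 1 * (TBC D N N' (\<rho>BC l) 0 0 - TBC D N N' (\<rho>BC l) 1 1)" for l
  define XAC where "XAC l = TL D N (\<rho>B l) 1 * TAB D N' (\<rho>AC l) 0 0 + TL D N (\<rho>B l) 0 * TAB D N' (\<rho>AC l) 0 1
       + TL D N (\<rho>B l) 0 * TAB D N' (\<rho>AC l) 1 0 - TL D N (\<rho>B l) 1 * TAB D N' (\<rho>AC l) 1 1" for l
  define XAB where "XAB l = TL D N' (\<rho>C l) 1 * TAB D N (\<rho>AB l) 0 0 + TL D N' (\<rho>C l) 0 * TAB D N (\<rho>AB l) 0 1
       + TL D N' (\<rho>C l) 0 * TAB D N (\<rho>AB l) 1 0 - TL D N' (\<rho>C l) 1 * TAB D N (\<rho>AB l) 1 1" for l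
  have b0: "(0::nat) \<in> {0,1}" and b1: "(1::nat) \<in> {0,1}" by simp_all
  have comb: "complex_of_real (4 * V) = (\<Sum>l<n. of_real (p l) * XA l + of_real (q l) * XAC l + of_real (r l) * XAB l)"
    unfolding M[symmetric] Ee[OF b0 b0 b1] Ee[OF b0 b1 b0] Ee[OF b1 b0 b0] Ee[OF b1 b1 b1]
    unfolding sum.distrib[symmetric] sum_subtractf[symmetric]
    by (intro sum.cong refl) (simp add: XA_def XAC_def XAB_def algebra_simps)
  have bnd: "Re (of_real (p l) * XA l + of_real (q l) * XAC l + of_real (r l) * XAB l) \<le> (p l + q l + r l) * (2 * sqrt 2)"
    if l: "l < n" for l
  proof -
    have sA: "psd_on qubit (\<rho>A l)" "trace_on qubit (\<rho>A l) = 1" using st[rule_format, OF l] unfolding state_on_def by simp_all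
    have sBC: "psd_on (D \<times> D) (\<rho>BC l)" "trace_on (D \<times> D) (\<rho>BC l) = 1" using st[rule_format, OF l] unfolding state_on_def D_def by simp_all
    have sAC: "psd_on (qubit \<times> D) (\<rho>AC l)" "trace_on (qubit \<times> D) (\<rho>AC l) = 1" using st[rule_format, OF l] unfolding state_on_def D_def by simp_all
    have sB: "psd_on D (\<rho>B l)" "trace_on D (\<rho>B l) = 1" using st[rule_format, OF l] unfolding state_on_def D_def by simp_all
    have sAB: "psd_on (qubit \<times> D) (\<rho>AB l)" "trace_on (qubit \<times> D) (\<rho>AB l) = 1" using st[rule_format, OF l] unfolding state_on_def D_def by simp_all
    have sC: "psd_on D (\<rho>C l)" "trace_on D (\<rho>C l) = 1" using st[rule_format, OF l] unfolding state_on_def D_def by simp_all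
    have wl: "0 \<le> p l" "0 \<le> q l" "0 \<le> r l" using w[rule_format, OF l] by simp_all
    have bA: "Re (XA l) \<le> 2 * sqrt 2" unfolding XA_def by (rule comp_A[OF PB PC sA sBC])
    have LB: "Im (TL D N (\<rho>B l) y) = 0" "\<bar>Re (TL D N (\<rho>B l) y)\<bar> \<le> 1" if "y \<in> {0,1}" for y
      unfolding TL_def using comp_L[OF PB[OF that] sB] by auto
    have LC: "Im (TL D N' (\<rho>C l) y) = 0" "\<bar>Re (TL D N' (\<rho>C l) y)\<bar> \<le> 1" if "y \<in> {0,1}" for y
      unfolding TL_def using comp_L[OF PC[OF that] sC] by auto
    have eB: "TL D N (\<rho>B l) y = complex_of_real (Re (TL D N (\<rho>B l) y))" if "y \<in> {0,1}" for y
      using LB(1)[OF that] by (simp add: complex_eq_iff)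
    have eC: "TL D N' (\<rho>C l) y = complex_of_real (Re (TL D N' (\<rho>C l) y))" if "y \<in> {0,1}" for y
      using LC(1)[OF that] by (simp add: complex_eq_iff)
    define kb where "kb y = Re (TL D N (\<rho>B l) y)" for y
    define kc where "kc y = Re (TL D N' (\<rho>C l) y)" for y
    have eB0: "TL D N (\<rho>B l) 0 = complex_of_real (kb 0)" using eB[of 0] by (simp add: kb_def)
    have eB1: "TL D N (\<rho>B l) 1 = complex_of_real (kb 1)" using eB[of 1] by (simp add: kb_def)
    have eC0: "TL D N' (\<rho>C l) 0 = complex_of_real (kc 0)" using eC[of 0] by (simp add: kc_def)
    have eC1: "TL D N' (\<rho>C l) 1 = complex_of_real (kc 1)" using eC[of 1] by (simp add: kc_def)
    have kb: "\<bar>kb 0\<bar> \<le> 1" "\<bar>kb 1\<bar> \<le> 1" using LB(2)[of 0] LB(2)[of 1] by (simp_all add: kb_def)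
    have kc: "\<bar>kc 0\<bar> \<le> 1" "\<bar>kc 1\<bar> \<le> 1" using LC(2)[of 0] LC(2)[of 1] by (simp_all add: kc_def)
    have bAC: "Re (XAC l) \<le> 2 * sqrt 2"
      unfolding XAC_def eB0 eB1
      by (rule comp_AB[OF PC[OF b0] PC[OF b1] sAC kb])
    have bAB: "Re (XAB l) \<le> 2 * sqrt 2"
      unfolding XAB_def eC0 eC1
      by (rule comp_AB[OF PB[OF b0] PB[OF b1] sAB kc])
    have "Re (of_real (p l) * XA l + of_real (q l) * XAC l + of_real (r l) * XAB l)
        = p l * Re (XA l) + q l * Re (XAC l) + r l * Re (XAB l)" by simp
    also have "\<dots> \<le> p l * (2 * sqrt 2) + q l * (2 * sqrt 2) + r l * (2 * sqrt 2)"
      using wl bA bAC bAB by (intro add_mono mult_left_mono) auto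
    finally show ?thesis by (simp add: algebra_simps)
  qed
  have "4 * V = (\<Sum>l<n. Re (of_real (p l) * XA l + of_real (q l) * XAC l + of_real (r l) * XAB l))"
    using arg_cong[where f=Re, OF comb] by (simp only: Re_complex_of_real Re_sum)
  also have "\<dots> \<le> (\<Sum>l<n. (p l + q l + r l) * (2 * sqrt 2))" by (rule sum_mono) (use bnd in auto)
  also have "\<dots> = 2 * sqrt 2" using ws by (simp add: sum_distrib_right[symmetric])
  finally show ?thesis .
qed



definition dg :: "('i \<Rightarrow> real) \<Rightarrow> 'i op" where
  "dg f = (\<lambda>i j. if i = j then complex_of_real (f i) else 0)"

definition r1 :: "('i \<Rightarrow> complex) \<Rightarrow> 'i op" where
  "r1 u = (\<lambda>i j. u i * cnj (u j))"

lemma qform_dg: "finite I \<Longrightarrow> qform I (dg f) v = complex_of_real (\<Sum>i\<in>I. f i * (cmod (v i))^2)"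
proof -
  assume fin: "finite I"
  have "qform I (dg f) v = (\<Sum>i\<in>I. cnj (v i) * complex_of_real (f i) * v i)"
    unfolding qform_def dg_def using fin by (intro sum.cong refl) (simp add: if_distrib if_distribR cong: if_cong)
  also have "\<dots> = (\<Sum>i\<in>I. complex_of_real (f i * (cmod (v i))^2))"
    by (intro sum.cong refl) (simp add: cnj_mult_self[symmetric] mult_ac del: of_real_power)
  finally show ?thesis by simp
qed

lemma psd_dg: assumes "finite I" "\<And>i. i \<in> I \<Longrightarrow> f i \<ge> 0" shows "psd_on I (dg f)"
  unfolding psd_on_def qform_dg[OF assms(1)] using assms(2) by (auto intro!: sum_nonneg)

lemma trace_dg: "trace_on I (dg f) = complex_of_real (\<Sum>i\<in>I. f i)"
  unfolding trace_on_def dg_def by simp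

lemma tr1_dg: "finite I \<Longrightarrow> tr1 I T (dg f) = (\<Sum>i\<in>I. T i i * complex_of_real (f i))"
  unfolding tr1_def dg_def by (intro sum.cong refl) (simp add: if_distrib if_distribR cong: if_cong)

lemma qform_r1: "qform I (r1 u) v = (\<Sum>i\<in>I. cnj (v i) * u i) * cnj (\<Sum>i\<in>I. cnj (v i) * u i)"
  unfolding qform_def r1_def by (simp add: sum_product mult_ac)

lemma psd_r1: "psd_on I (r1 u)"
  unfolding psd_on_def qform_r1 by (simp only: complex_mult_cnj Re_complex_of_real Im_complex_of_real) auto

lemma tr1_r1: "tr1 I T (r1 u) = qform I T u"
  unfolding tr1_def r1_def qform_def by (simp add: mult_ac)

lemma trace_r1: "trace_on I (r1 u) = complex_of_real (nrm I u)"
  unfolding trace_on_def r1_def nrm_def by (simp add: complex_norm_square del: of_real_power)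

lemma psd_add: "psd_on I A \<Longrightarrow> psd_on I B \<Longrightarrow> psd_on I (\<lambda>i j. A i j + B i j)"
  unfolding psd_on_def qform_add by simp

lemma psd_cong: "psd_on I A \<Longrightarrow> (\<And>i j. i \<in> I \<Longrightarrow> j \<in> I \<Longrightarrow> B i j = A i j) \<Longrightarrow> psd_on I B"
  unfolding psd_on_def using qform_mat_cong[of I B A] by metis



definition bob :: "nat \<Rightarrow> nat \<Rightarrow> nat op" where
  "bob y b i j = (if i < 2 \<and> j < 2 then alice_proj y b i j else if i = j \<and> b = 0 then 1 else 0)"

definition cbit :: "nat \<Rightarrow> nat \<Rightarrow> nat" where
  "cbit z i = (if z = 0 then i mod 2 else (i div 2) mod 2)"

definition charlie :: "nat \<Rightarrow> nat \<Rightarrow> nat op" where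
  "charlie z c = dg (\<lambda>i. if cbit z i = c then 1 else 0)"

definition psi :: "real \<Rightarrow> real \<Rightarrow> nat \<times> nat \<Rightarrow> complex" where
  "psi s0 s1 = (\<lambda>k. if k = (0, 0) then complex_of_real (1 / sqrt 2)
      else if k = (1, 1) then (complex_of_real s1 + \<i> * complex_of_real s0) / 2 else 0)"

definition tl :: "real \<Rightarrow> real \<Rightarrow> nat \<Rightarrow> nat \<Rightarrow> real" where
  "tl s0 s1 x y = (if x = 0 \<and> y = 0 then s1 else if x = 1 \<and> y = 1 then - s1 else s0) / sqrt 2"

lemma E4_gen:
  assumes "s0 \<in> {1, -1}" "s1 \<in> {1, -1}" "x \<in> {0,1}" "y \<in> {0,1}" "a \<in> {0,1}" "b \<in> {0,1}"
  shows "qform (qubit \<times> {0..<4}) (tens (alice_proj x a) (bob y b)) (psi s0 s1)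
       = complex_of_real ((1 + (-1)^(a+b) * tl s0 s1 x y) / 4)"
proof -
  have q: "qform (qubit \<times> {0..<4}) (tens (alice_proj x a) (bob y b)) (psi s0 s1)
     = qform (qubit \<times> {0..<4}) (tens (alice_proj x a) (bob y b))
         (\<lambda>k. if k = (0, 0) then complex_of_real (1 / sqrt 2)
              else if k = (1, 1) then (complex_of_real s1 + \<i> * complex_of_real s0) / 2 else 0)"
    unfolding psi_def ..
  have two: "(0::nat, 0::nat) \<in> qubit \<times> {0..<4}" "(1::nat, 1::nat) \<in> qubit \<times> {0..<4}" "(0::nat, 0::nat) \<noteq> (1, 1)"
    by (auto simp: qubit_def)
  have s2: "sqrt 2 * sqrt 2 = (2::real)" "\<And>z. sqrt 2 * (sqrt 2 * z) = (2::real) * z" by (simp_all add: mult.assoc[symmetric])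
  have fin: "finite (qubit \<times> {0..<4::nat})" by (simp add: qubit_def)
  show ?thesis unfolding q qform_two[OF fin two, of "tens (alice_proj x a) (bob y b)"]
    using assms
    by (auto simp: s2 qubit_def tens_def bob_def alice_proj_def alice_obs_def sigma_x_def sigma_y_def tl_def
        complex_eq_iff field_simps power2_eq_square)
qed



lemma D4: "{0..<4::nat} = {0,1,2,3}" by auto

lemma qform_scale: "qform I (\<lambda>i j. c * A i j) v = c * qform I A v"
  unfolding qform_def by (simp add: sum_distrib_left mult_ac)

lemma psd_scale: "psd_on I A \<Longrightarrow> 0 \<le> c \<Longrightarrow> psd_on I (\<lambda>i j. complex_of_real c * A i j)"
  unfolding psd_on_def qform_scale by simp

definition bv :: "nat \<Rightarrow> nat \<Rightarrow> nat \<Rightarrow> complex" where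
  "bv y b = (\<lambda>i. if i = 0 then 1 else if i = 1 then (if y = 0 then (-1)^b else \<i> * (-1)^b) else 0)"

lemma bob_psd: assumes "y \<in> {0,1}" "b \<in> {0,1}" shows "psd_on {0..<4} (bob y b)"
proof (rule psd_cong)
  show "psd_on {0..<4} (\<lambda>i j. complex_of_real (1/2) * r1 (bv y b) i j + dg (\<lambda>i. if b = 0 \<and> 2 \<le> i then 1 else 0) i j)"
    by (intro psd_add psd_scale psd_r1 psd_dg) auto
  fix i j :: nat assume "i \<in> {0..<4}" "j \<in> {0..<4}"
  then show "bob y b i j = complex_of_real (1/2) * r1 (bv y b) i j + dg (\<lambda>i. if b = 0 \<and> 2 \<le> i then 1 else 0) i j"
    using assms unfolding D4
    by (auto simp: bob_def r1_def bv_def dg_def alice_proj_def alice_obs_def sigma_x_def sigma_y_def)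
qed

lemma bob_povm: assumes "y \<in> {0,1}" shows "povm2_on {0..<4} (bob y)"
  unfolding povm2_on_def
proof (intro conjI ballI)
  show "psd_on {0..<4} (bob y 0)" "psd_on {0..<4} (bob y 1)" using bob_psd assms by auto
  fix i j :: nat assume "i \<in> {0..<4}" "j \<in> {0..<4}"
  then show "bob y 0 i j + bob y 1 i j = (if i = j then 1 else 0)"
    unfolding bob_def alice_proj_def by (auto simp: field_simps)
qed

lemma cbit_lt: "cbit z i < 2" unfolding cbit_def by auto

lemma charlie_povm: "povm2_on {0..<4} (charlie z)"
  unfolding povm2_on_def charlie_def
proof (intro conjI ballI)
  show "psd_on {0..<4} (dg (\<lambda>i. if cbit z i = 0 then 1 else 0))" "psd_on {0..<4} (dg (\<lambda>i. if cbit z i = 1 then 1 else 0))"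
    by (auto intro!: psd_dg)
  fix i j :: nat assume "i \<in> {0..<4}" "j \<in> {0..<4}"
  have "cbit z i = 0 \<or> cbit z i = 1" using cbit_lt[of z i] by auto
  then show "dg (\<lambda>i. if cbit z i = 0 then 1 else 0) i j + dg (\<lambda>i. if cbit z i = 1 then 1 else 0) i j = (if i = j then 1 else 0)"
    unfolding dg_def by auto
qed



definition sg0 :: "nat \<Rightarrow> real" where "sg0 l = (-1)^(l mod 2)"
definition sg1 :: "nat \<Rightarrow> real" where "sg1 l = (-1)^((l div 2) mod 2)"

lemma sg_in: "sg0 l \<in> {1, -1}" "sg1 l \<in> {1, -1}"
proof -
  have "l mod 2 = 0 \<or> l mod 2 = 1" "(l div 2) mod 2 = 0 \<or> (l div 2) mod 2 = 1" by auto
  then show "sg0 l \<in> {1, -1}" "sg1 l \<in> {1, -1}" unfolding sg0_def sg1_def by auto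
qed

definition rAm :: "nat op" where "rAm = dg (\<lambda>i. 1/2)"
definition rBCm :: "(nat \<times> nat) op" where "rBCm = dg (\<lambda>(b, c). if b < 2 then 1/8 else 0)"
definition rACm :: "(nat \<times> nat) op" where "rACm = dg (\<lambda>i. if i = (0, 0) then 1 else 0)"
definition rBm :: "nat op" where "rBm = dg (\<lambda>i. if i = 0 then 1 else 0)"
definition rABm :: "nat \<Rightarrow> (nat \<times> nat) op" where "rABm l = r1 (psi (sg0 l) (sg1 l))"
definition rCm :: "nat \<Rightarrow> nat op" where "rCm l = dg (\<lambda>i. if i = l mod 4 then 1 else 0)"

lemma st_A: "state_on qubit rAm"
  unfolding state_on_def rAm_def by (auto intro!: psd_dg simp: trace_dg qubit_def)

lemma st_BC: "state_on ({0..<4} \<times> {0..<4}) rBCm"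
  unfolding state_on_def rBCm_def
  by (auto intro!: psd_dg simp: trace_dg sum_pair D4)

lemma st_AC: "state_on (qubit \<times> {0..<4}) rACm"
  unfolding state_on_def rACm_def
  by (auto intro!: psd_dg simp: trace_dg sum_pair D4 qubit_eq)

lemma st_B: "state_on {0..<4} rBm"
  unfolding state_on_def rBm_def by (auto intro!: psd_dg simp: trace_dg D4)

lemma st_C: "state_on {0..<4} (rCm l)"
proof -
  have "(\<Sum>i\<in>{0..<4}. if i = l mod 4 then 1 else (0::real)) = 1"
    by (simp add: sum.delta)
  then show ?thesis unfolding state_on_def rCm_def by (auto intro!: psd_dg simp: trace_dg)
qed

lemma st_AB: "state_on (qubit \<times> {0..<4}) (rABm l)"
proof -
  have s: "sg0 l \<in> {1, -1}" "sg1 l \<in> {1, -1}" by (rule sg_in)+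
  have "nrm (qubit \<times> {0..<4}) (psi (sg0 l) (sg1 l)) = 1"
    unfolding nrm_def sum_pair qubit_eq D4 psi_def using s
    by (auto simp: cmod_def power2_eq_square power_divide)
  then show ?thesis unfolding state_on_def rABm_def by (simp add: psd_r1 trace_r1)
qed

lemma E1: "tr1 qubit (alice_proj x a) rAm = 1/2"
  unfolding rAm_def tr1_dg[OF finite_atLeastLessThan[of 0 2, folded qubit_def]]
  unfolding qubit_eq by (simp add: alice_proj_def alice_obs_def sigma_x_def sigma_y_def field_simps)

lemma E2: assumes "y \<in> {0,1}" "b \<in> {0,1}" "c \<in> {0,1}"
  shows "tr1 ({0..<4} \<times> {0..<4}) (tens (bob y b) (charlie z c)) rBCm = 1/4"
proof -
  have fin: "finite ({0..<4::nat} \<times> {0..<4::nat})" by simp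
  show ?thesis unfolding rBCm_def tr1_dg[OF fin] sum_pair unfolding D4
    using assms by (auto simp: tens_def bob_def charlie_def dg_def cbit_def alice_proj_def alice_obs_def
       sigma_x_def sigma_y_def field_simps)
qed

lemma E3: "tr1 {0..<4} (charlie z c) (rCm l) = (if cbit z (l mod 4) = c then 1 else 0)"
proof -
  have "tr1 {0..<4} (charlie z c) (rCm l) = (\<Sum>i\<in>{0..<4}. if i = l mod 4 then charlie z c i i else 0)"
    unfolding rCm_def tr1_dg[OF finite_atLeastLessThan] by (intro sum.cong refl) auto
  also have "\<dots> = charlie z c (l mod 4) (l mod 4)" by (simp add: sum.delta)
  finally show ?thesis by (simp add: charlie_def dg_def)
qed

lemma E4: assumes "x \<in> {0,1}" "y \<in> {0,1}" "a \<in> {0,1}" "b \<in> {0,1}"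
  shows "tr1 (qubit \<times> {0..<4}) (tens (alice_proj x a) (bob y b)) (rABm l)
     = complex_of_real ((1 + (-1)^(a+b) * tl (sg0 l) (sg1 l) x y) / 4)"
  unfolding rABm_def tr1_r1 using E4_gen[OF sg_in assms] .



lemma lt4: "{..<4::nat} = {0,1,2,3}" by auto

lemma model_real:
  assumes "a \<in> {0,1}" "b \<in> {0,1}" "c \<in> {0,1}" "x \<in> {0,1}" "y \<in> {0,1}" "z \<in> {0,1}"
  shows "mermin V a b c x y z = (1 - sqrt 2 * V) / 8 +
     (\<Sum>l<4. (sqrt 2 * V / 4) * ((1 + (-1)^(a+b) * tl (sg0 l) (sg1 l) x y) / 4) * (if cbit z l = c then 1 else 0))"
  using assms unfolding lt4
  by (auto simp: mermin_def tl_def sg0_def sg1_def cbit_def field_simps)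

definition pw :: "real \<Rightarrow> nat \<Rightarrow> real" where "pw V l = (if l = 4 then 1 - sqrt 2 * V else 0)"
definition qw :: "nat \<Rightarrow> real" where "qw l = 0"
definition rw :: "real \<Rightarrow> nat \<Rightarrow> real" where "rw V l = (if l < 4 then sqrt 2 * V / 4 else 0)"

definition rhom :: "real \<Rightarrow> (nat \<times> nat \<times> nat) op" where
  "rhom V = (\<lambda>(a, b, c) (a', b', c'). \<Sum>l<5. of_real (pw V l) * rAm a a' * rBCm (b, c) (b', c')
                  + of_real (qw l) * rACm (a, c) (a', c') * rBm b b'
                  + of_real (rw V l) * rABm l (a, b) (a', b') * rCm l c c')"

lemma rhom_formula: "\<forall>(a, b, c) \<in> tri_index 4. \<forall>(a', b', c') \<in> tri_index 4.
          rhom V (a, b, c) (a', b', c') =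
            (\<Sum>l<5. of_real (pw V l) * (\<lambda>l. rAm) l a a' * (\<lambda>l. rBCm) l (b, c) (b', c')
                  + of_real (qw l) * (\<lambda>l. rACm) l (a, c) (a', c') * (\<lambda>l. rBm) l b b'
                  + of_real (rw V l) * rABm l (a, b) (a', b') * rCm l c c')"
  unfolding rhom_def by simp

lemma easy_dir:
  fixes V :: real
  assumes V0: "0 < V" and V1: "V \<le> 1 / sqrt 2"
  shows "\<exists>(d::nat) \<rho> (N :: nat \<Rightarrow> nat \<Rightarrow> nat op) (N' :: nat \<Rightarrow> nat \<Rightarrow> nat op).
          1 \<le> d \<and> biseparable d \<rho> \<and>
          (\<forall>y\<in>{0,1}. povm2_on {0..<d} (N y)) \<and>
          (\<forall>z\<in>{0,1}. povm2_on {0..<d} (N' z)) \<and>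
          (\<forall>a\<in>{0,1}. \<forall>b\<in>{0,1}. \<forall>c\<in>{0,1}. \<forall>x\<in>{0,1}. \<forall>y\<in>{0,1}. \<forall>z\<in>{0,1}.
             complex_of_real (mermin V a b c x y z) =
               tri_prob d \<rho> (alice_proj x a) (N y b) (N' z c))"
proof (intro exI conjI)
  have w1: "sqrt 2 * V \<le> 1" using V1 by (simp add: field_simps)
  have w0: "0 \<le> sqrt 2 * V" using V0 by simp
  show "1 \<le> (4::nat)" by simp
  show "biseparable 4 (rhom V)"
    unfolding biseparable_def
  proof (intro exI conjI)
    show "\<forall>l<5. 0 \<le> pw V l \<and> 0 \<le> qw l \<and> 0 \<le> rw V l" using w0 w1 by (auto simp: pw_def qw_def rw_def)
    show "(\<Sum>l<5. pw V l + qw l + rw V l) = 1" by (simp add: lessThan_nat_numeral pw_def qw_def rw_def)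
    show "\<forall>l<5. state_on qubit ((\<lambda>l. rAm) l) \<and> state_on ({0..<4} \<times> {0..<4}) ((\<lambda>l. rBCm) l) \<and>
              state_on (qubit \<times> {0..<4}) ((\<lambda>l. rACm) l) \<and> state_on {0..<4} ((\<lambda>l. rBm) l) \<and>
              state_on (qubit \<times> {0..<4}) (rABm l) \<and> state_on {0..<4} (rCm l)"
      by (simp add: st_A st_BC st_AC st_B st_AB st_C)
    show "\<forall>(a, b, c) \<in> tri_index 4. \<forall>(a', b', c') \<in> tri_index 4.
          rhom V (a, b, c) (a', b', c') =
            (\<Sum>l<5. of_real (pw V l) * (\<lambda>l. rAm) l a a' * (\<lambda>l. rBCm) l (b, c) (b', c')
                  + of_real (qw l) * (\<lambda>l. rACm) l (a, c) (a', c') * (\<lambda>l. rBm) l b b'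
                  + of_real (rw V l) * rABm l (a, b) (a', b') * rCm l c c')"
      by (rule rhom_formula)
  qed
  show "\<forall>y\<in>{0,1}. povm2_on {0..<4} (bob y)" using bob_povm by blast
  show "\<forall>z\<in>{0,1}. povm2_on {0..<4} (charlie z)" using charlie_povm by blast
  show "\<forall>a\<in>{0,1}. \<forall>b\<in>{0,1}. \<forall>c\<in>{0,1}. \<forall>x\<in>{0,1}. \<forall>y\<in>{0,1}. \<forall>z\<in>{0,1}.
             complex_of_real (mermin V a b c x y z) =
               tri_prob 4 (rhom V) (alice_proj x a) (bob y b) (charlie z c)"
  proof (intro ballI)
    fix a b c x y z :: nat
    assume bits: "a \<in> {0,1}" "b \<in> {0,1}" "c \<in> {0,1}" "x \<in> {0,1}" "y \<in> {0,1}" "z \<in> {0,1}"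
    have "tri_prob 4 (rhom V) (alice_proj x a) (bob y b) (charlie z c)
      = (\<Sum>l<5. of_real (pw V l) * (tr1 qubit (alice_proj x a) rAm * tr1 ({0..<4} \<times> {0..<4}) (tens (bob y b) (charlie z c)) rBCm)
        + of_real (qw l) * (tr1 (qubit \<times> {0..<4}) (tens (alice_proj x a) (charlie z c)) rACm * tr1 {0..<4} (bob y b) rBm)
        + of_real (rw V l) * (tr1 (qubit \<times> {0..<4}) (tens (alice_proj x a) (bob y b)) (rABm l) * tr1 {0..<4} (charlie z c) (rCm l)))"
      by (rule tri_prob_bisep[OF rhom_formula])
    also have "\<dots> = (\<Sum>l<5. of_real (pw V l) * (1/2 * 1/4)
        + of_real (rw V l) * (complex_of_real ((1 + (-1)^(a+b) * tl (sg0 l) (sg1 l) x y) / 4) * (if cbit z (l mod 4) = c then 1 else 0)))"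
      using bits by (simp add: E1 E2 E3 E4 qw_def)
    also have "\<dots> = complex_of_real ((1 - sqrt 2 * V) / 8 +
     (\<Sum>l<4. (sqrt 2 * V / 4) * ((1 + (-1)^(a+b) * tl (sg0 l) (sg1 l) x y) / 4) * (if cbit z l = c then 1 else 0)))"
      by (simp add: lessThan_nat_numeral pw_def rw_def lt4)
    also have "\<dots> = complex_of_real (mermin V a b c x y z)" using model_real[OF bits] by simp
    finally show "complex_of_real (mermin V a b c x y z) = tri_prob 4 (rhom V) (alice_proj x a) (bob y b) (charlie z c)" by simp
  qed
qed



theorem proposition7:
  fixes V :: real
  assumes "0 < V" and "V \<le> 1"
  shows "genuine_tripartite_steering_2SDI (mermin V) \<longleftrightarrow> V > 1 / sqrt 2"
proof
  assume g: "genuine_tripartite_steering_2SDI (mermin V)"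
  show "V > 1 / sqrt 2"
  proof (rule ccontr)
    assume "\<not> V > 1 / sqrt 2"
    then have "V \<le> 1 / sqrt 2" by simp
    from easy_dir[OF assms(1) this] g show False
      unfolding genuine_tripartite_steering_2SDI_def by blast
  qed
next
  assume v: "V > 1 / sqrt 2"
  show "genuine_tripartite_steering_2SDI (mermin V)"
    unfolding genuine_tripartite_steering_2SDI_def
  proof
    assume "\<exists>(d::nat) \<rho> (N :: nat \<Rightarrow> nat \<Rightarrow> nat op) (N' :: nat \<Rightarrow> nat \<Rightarrow> nat op).
          1 \<le> d \<and> biseparable d \<rho> \<and>
          (\<forall>y\<in>{0,1}. povm2_on {0..<d} (N y)) \<and>
          (\<forall>z\<in>{0,1}. povm2_on {0..<d} (N' z)) \<and>
          (\<forall>a\<in>{0,1}. \<forall>b\<in>{0,1}. \<forall>c\<in>{0,1}. \<forall>x\<in>{0,1}. \<forall>y\<in>{0,1}. \<forall>z\<in>{0,1}.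
             complex_of_real (mermin V a b c x y z) =
               tri_prob d \<rho> (alice_proj x a) (N y b) (N' z c))"
    then obtain d \<rho> N N' where h: "1 \<le> d" "biseparable d \<rho>"
          "\<forall>y\<in>{0,1}. povm2_on {0..<d} (N y)" "\<forall>z\<in>{0,1}. povm2_on {0..<d} (N' z)"
          "\<forall>a\<in>{0,1}. \<forall>b\<in>{0,1}. \<forall>c\<in>{0,1}. \<forall>x\<in>{0,1}. \<forall>y\<in>{0,1}. \<forall>z\<in>{0,1}.
             complex_of_real (mermin V a b c x y z) =
               tri_prob d \<rho> (alice_proj x a) (N y b) (N' z c)"
      by blast
    have "4 * V \<le> 2 * sqrt 2" by (rule hard_dir[OF h])
    then have "2 * V * sqrt 2 \<le> sqrt 2 * sqrt 2" by (intro mult_right_mono) auto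
    then have "V * sqrt 2 \<le> 1" by simp
    then have "V \<le> 1 / sqrt 2" by (simp add: field_simps)
    with v show False by simp
  qed
qed


end
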